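(* Let $X,Y$ be real Banach spaces both having the strong diameter two property. Then the projective tensor product $X\widehat{\otimes}_\pi Y$ has the strong diameter two property.
   Context: A slice of $B_X$ is $\{x\in B_X:x^*(x)>1-\alpha\}$ with $x^*\in S_{X^*}$, $0<\alpha<1$. A Banach space has the strong diameter two property (SD2P) if every convex combination $\sum_{i=1}^n\lambda_iS_i$ of slices $S_i$ of its unit ball ($\lambda_i\ge0$, $\sum\lambda_i=1$) has diameter $2$. $X\widehat{\otimes}_\pi Y$ is the completion of $X\otimes Y$ under $\|u\|=\inf\{\sum_{i=1}^n\|x_i\|\|y_i\|: u=\sum_{i=1}^n x_i\otimes y_i\}$. *)

theory Defs
  imports "HOL-Analysis.Analysis"
begin

text \<open>A (semi)normed real vector space presented by explicit operations on a carrier.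
  A genuine normed space (type class instance) is presented by normed_space_of.\<close>

record 'v nspace =
  carrier :: "'v set"
  vadd    :: "'v \<Rightarrow> 'v \<Rightarrow> 'v"
  vscale  :: "real \<Rightarrow> 'v \<Rightarrow> 'v"
  vzero   :: "'v"
  vnorm   :: "'v \<Rightarrow> real"

definition normed_space_of :: "'a::real_normed_vector itself \<Rightarrow> 'a nspace" where
  "normed_space_of _ = \<lparr>carrier = UNIV, vadd = (+), vscale = (*\<^sub>R), vzero = 0, vnorm = norm\<rparr>"

definition dual_unit :: "'v nspace \<Rightarrow> ('v \<Rightarrow> real) \<Rightarrow> bool" where
  "dual_unit E f \<longleftrightarrow>
     (\<forall>u\<in>carrier E. \<forall>v\<in>carrier E. f (vadd E u v) = f u + f v) \<and>
     (\<forall>c. \<forall>v\<in>carrier E. f (vscale E c v) = c * f v) \<and>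
     (\<exists>C. \<forall>v\<in>carrier E. \<bar>f v\<bar> \<le> C * vnorm E v) \<and>
     (SUP v\<in>{v\<in>carrier E. vnorm E v \<le> 1}. f v) = 1"

definition slice :: "'v nspace \<Rightarrow> ('v \<Rightarrow> real) \<Rightarrow> real \<Rightarrow> 'v set" where
  "slice E f \<alpha> = {x\<in>carrier E. vnorm E x \<le> 1 \<and> f x > 1 - \<alpha>}"

primrec lincomb :: "'v nspace \<Rightarrow> nat \<Rightarrow> (nat \<Rightarrow> real) \<Rightarrow> (nat \<Rightarrow> 'v) \<Rightarrow> 'v" where
  "lincomb E 0 l x = vzero E"
| "lincomb E (Suc n) l x = vadd E (lincomb E n l x) (vscale E (l n) (x n))"

definition ndiam :: "'v nspace \<Rightarrow> 'v set \<Rightarrow> real" where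
  "ndiam E S = Sup {vnorm E (vadd E a (vscale E (-1) b)) | a b. a \<in> S \<and> b \<in> S}"

definition SD2P :: "'v nspace \<Rightarrow> bool" where
  "SD2P E \<longleftrightarrow>
     (\<forall>n::nat. \<forall>l f \<alpha>. n > 0 \<longrightarrow> (\<forall>i<n. l i \<ge> 0) \<longrightarrow> (\<Sum>i<n. l i) = 1 \<longrightarrow>
        (\<forall>i<n. dual_unit E (f i) \<and> 0 < \<alpha> i \<and> \<alpha> i < 1) \<longrightarrow>
        ndiam E {lincomb E n l x | x. \<forall>i<n. x i \<in> slice E (f i) (\<alpha> i)} = 2)"

text \<open>Free real vector space on X \<times> Y: finitely supported functions.\<close>
definition free_vs :: "('a \<times> 'b \<Rightarrow> real) set" where
  "free_vs = {w. finite {p. w p \<noteq> 0}}"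

definition delta :: "'a \<Rightarrow> 'b \<Rightarrow> ('a \<times> 'b \<Rightarrow> real)" where
  "delta x y = (\<lambda>p. if p = (x, y) then 1 else 0)"

definition bilin_rels :: "('a::real_vector \<times> 'b::real_vector \<Rightarrow> real) set" where
  "bilin_rels =
     {(\<lambda>p. delta (x + x') y p - delta x y p - delta x' y p) | x x' y. True} \<union>
     {(\<lambda>p. delta x (y + y') p - delta x y p - delta x y' p) | x y y'. True} \<union>
     {(\<lambda>p. delta (c *\<^sub>R x) y p - c * delta x y p) | c x y. True} \<union>
     {(\<lambda>p. delta x (c *\<^sub>R y) p - c * delta x y p) | c x y. True}"

text \<open>Their linear span; X \<otimes> Y is free_vs modulo this subspace.\<close>
definition tensor_null :: "('a::real_vector \<times> 'b::real_vector \<Rightarrow> real) set" where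
  "tensor_null = {w. \<exists>(n::nat) c (r :: nat \<Rightarrow> ('a \<times> 'b \<Rightarrow> real)). (\<forall>i<n. r i \<in> bilin_rels) \<and> w = (\<lambda>p. \<Sum>i<n. c i * r i p)}"

definition proj_norm :: "('a::real_normed_vector \<times> 'b::real_normed_vector \<Rightarrow> real) \<Rightarrow> real" where
  "proj_norm w = Inf {(\<Sum>i<n. norm (x i) * norm (y i)) | (n::nat) x y.
       (\<lambda>p. w p - (\<Sum>i<n. delta (x i) (y i) p)) \<in> tensor_null}"

text \<open>Completion of (X \<otimes> Y, projective norm): Cauchy sequences of algebraic tensors,
  with the limit seminorm (identification of equivalent Cauchy sequences is implicit:
  the seminorm vanishes exactly on null sequences).\<close>
definition proj_tensor :: "'a::real_normed_vector itself \<Rightarrow> 'b::real_normed_vector itself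
    \<Rightarrow> (nat \<Rightarrow> ('a \<times> 'b \<Rightarrow> real)) nspace" where
  "proj_tensor _ _ = \<lparr>
     carrier = {s. (\<forall>n. s n \<in> free_vs) \<and>
                   (\<forall>e>0. \<exists>M. \<forall>m\<ge>M. \<forall>n\<ge>M. proj_norm (\<lambda>p. s m p - s n p) < e)},
     vadd = (\<lambda>s t n p. s n p + t n p),
     vscale = (\<lambda>c s n p. c * s n p),
     vzero = (\<lambda>n p. 0),
     vnorm = (\<lambda>s. lim (\<lambda>n. proj_norm (s n)))\<rparr>"

end

theory Submission
  imports Defs
begin

definition hb_good :: "'a::real_normed_vector \<Rightarrow> ('a \<times> real) set \<Rightarrow> bool" where
  "hb_good z G \<longleftrightarrow> (0,0) \<in> G \<and>
     (\<forall>x a y b. (x,a)\<in>G \<longrightarrow> (y,b)\<in>G \<longrightarrow> (x+y,a+b)\<in>G) \<and>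
     (\<forall>c x a. (x,a)\<in>G \<longrightarrow> (c *\<^sub>R x, c*a)\<in>G) \<and>
     (\<forall>x a. (x,a)\<in>G \<longrightarrow> a \<le> norm x) \<and> (z, norm z) \<in> G"

lemma hb_good_unique:
  assumes g: "hb_good z G" and "(x,a)\<in>G" "(x,b)\<in>G"
  shows "a = b"
proof -
  have m: "(-1 *\<^sub>R x, -1*b) \<in> G" using g assms(3) unfolding hb_good_def by blast
  have d: "(x + -1 *\<^sub>R x, a + -1*b) \<in> G" using g assms(2) m unfolding hb_good_def by blast
  hence d0: "(0, a - b) \<in> G" by simp
  have "(-1 *\<^sub>R 0, -1*(a-b)) \<in> G" using g d0 unfolding hb_good_def by blast
  hence "(0::'a, b - a) \<in> G" by simp
  hence "b - a \<le> 0" using g unfolding hb_good_def by fastforce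
  moreover have "a - b \<le> 0" using g d0 unfolding hb_good_def by fastforce
  ultimately show ?thesis by simp
qed

lemma hb_extend:
  assumes g: "hb_good z M" and nw: "\<forall>a. (w,a) \<notin> M"
  shows "\<exists>M'. hb_good z M' \<and> M \<subseteq> M' \<and> M' \<noteq> M"
proof -
  define A where "A = {a - norm (x - w) | x a. (x,a)\<in>M}"
  define c where "c = Sup A"
  have Ane: "A \<noteq> {}" using g unfolding A_def hb_good_def by blast
  have sum_le: "a + b \<le> norm (x + y)" if "(x,a)\<in>M" "(y,b)\<in>M" for x a y b
    using g that unfolding hb_good_def by blast
  have Aub: "t \<le> norm (y + w) - b" if "t \<in> A" "(y,b)\<in>M" for t y b
  proof -
    obtain x a where t: "t = a - norm (x - w)" "(x,a)\<in>M" using \<open>t\<in>A\<close> unfolding A_def by blast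
    have "a + b \<le> norm (x + y)" using sum_le t(2) that(2) by blast
    also have "norm (x + y) \<le> norm (x - w) + norm (y + w)"
      using norm_triangle_ineq[of "x - w" "y + w"] by simp
    finally show ?thesis using t by simp
  qed
  have bdd: "bdd_above A" using Aub g unfolding bdd_above_def hb_good_def by blast
  have c_ge: "a - norm (x - w) \<le> c" if "(x,a)\<in>M" for x a
    unfolding c_def using that bdd by (intro cSup_upper) (auto simp: A_def)
  have c_le: "c \<le> norm (y + w) - b" if "(y,b)\<in>M" for y b
    unfolding c_def using Ane Aub that by (intro cSup_least) auto
  define M' where "M' = {(x + t *\<^sub>R w, a + t * c) | x a t. (x,a)\<in>M}"
  have bound: "a + t * c \<le> norm (x + t *\<^sub>R w)" if "(x,a)\<in>M" for x a t
  proof (cases "t = 0")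
    case True then show ?thesis using g that unfolding hb_good_def by auto
  next
    case False
    have sc: "((1/t) *\<^sub>R x, (1/t)*a) \<in> M" using g that unfolding hb_good_def by blast
    show ?thesis
    proof (cases "t > 0")
      case True
      have "c \<le> norm ((1/t) *\<^sub>R x + w) - (1/t)*a" using c_le[OF sc] .
      hence "t * c \<le> t * (norm ((1/t) *\<^sub>R x + w) - (1/t)*a)" using True by simp
      also have "t * norm ((1/t) *\<^sub>R x + w) = norm (x + t *\<^sub>R w)"
      proof -
        have "t * norm ((1/t) *\<^sub>R x + w) = norm (t *\<^sub>R ((1/t) *\<^sub>R x + w))" using True by simp
        also have "t *\<^sub>R ((1/t) *\<^sub>R x + w) = x + t *\<^sub>R w" using True by (simp add: scaleR_add_right)
        finally show ?thesis .
      qed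
      hence "t * (norm ((1/t) *\<^sub>R x + w) - (1/t)*a) = norm (x + t *\<^sub>R w) - a"
        using True by (simp add: right_diff_distrib)
      finally show ?thesis by simp
    next
      case False2: False
      hence tn: "t < 0" using False by simp
      define s where "s = -t"
      have sp: "s > 0" using tn s_def by simp
      have sc2: "((1/s) *\<^sub>R x, (1/s)*a) \<in> M" using g that unfolding hb_good_def by blast
      have "(1/s)*a - norm ((1/s) *\<^sub>R x - w) \<le> c" using c_ge[OF sc2] .
      hence "s * ((1/s)*a - norm ((1/s) *\<^sub>R x - w)) \<le> s * c" using sp by (simp add: mult_left_mono)
      moreover have "s * norm ((1/s) *\<^sub>R x - w) = norm (x + t *\<^sub>R w)"
      proof -
        have "s * norm ((1/s) *\<^sub>R x - w) = norm (s *\<^sub>R ((1/s) *\<^sub>R x - w))" using sp by simp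
        also have "s *\<^sub>R ((1/s) *\<^sub>R x - w) = x + t *\<^sub>R w" using sp s_def by (simp add: scaleR_diff_right)
        finally show ?thesis .
      qed
      ultimately have "a - norm (x + t *\<^sub>R w) \<le> s * c" using sp by (simp add: right_diff_distrib)
      thus ?thesis using s_def by simp
    qed
  qed
  have "hb_good z M'"
    unfolding hb_good_def
  proof (intro conjI allI impI)
    show "(0,0) \<in> M'" unfolding M'_def using g unfolding hb_good_def by force
    show "(z, norm z) \<in> M'" unfolding M'_def using g unfolding hb_good_def by force
  next
    fix x a y b assume "(x,a)\<in>M'" "(y,b)\<in>M'"
    then obtain x1 a1 t1 x2 a2 t2 where e: "x = x1 + t1 *\<^sub>R w" "a = a1 + t1 * c" "(x1,a1)\<in>M"
      "y = x2 + t2 *\<^sub>R w" "b = a2 + t2 * c" "(x2,a2)\<in>M" unfolding M'_def by blast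
    have "(x1+x2, a1+a2) \<in> M" using g e unfolding hb_good_def by blast
    moreover have "x + y = (x1+x2) + (t1+t2) *\<^sub>R w" "a + b = (a1+a2) + (t1+t2)*c"
      using e by (auto simp: algebra_simps)
    ultimately show "(x+y, a+b) \<in> M'" unfolding M'_def by blast
  next
    fix k x a assume "(x,a)\<in>M'"
    then obtain x1 a1 t1 where e: "x = x1 + t1 *\<^sub>R w" "a = a1 + t1 * c" "(x1,a1)\<in>M"
      unfolding M'_def by blast
    have "(k *\<^sub>R x1, k*a1) \<in> M" using g e unfolding hb_good_def by blast
    moreover have "k *\<^sub>R x = k *\<^sub>R x1 + (k * t1) *\<^sub>R w" "k * a = k*a1 + (k * t1)*c"
      using e by (auto simp: algebra_simps)
    ultimately show "(k *\<^sub>R x, k*a) \<in> M'" unfolding M'_def by blast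
  next
    fix x a assume "(x,a)\<in>M'"
    then show "a \<le> norm x" unfolding M'_def using bound by blast
  qed
  moreover have "M \<subseteq> M'"
  proof
    fix p assume "p \<in> M"
    then obtain x a where "p = (x,a)" "(x,a)\<in>M" by (cases p) auto
    thus "p \<in> M'" unfolding M'_def by force
  qed
  moreover have "(w, c) \<in> M'" unfolding M'_def using g unfolding hb_good_def by force
  hence "M' \<noteq> M" using nw by blast
  ultimately show ?thesis by blast
qed

lemma hahn_banach_norm:
  fixes z :: "'a::real_normed_vector"
  shows "\<exists>f. (\<forall>x y. f (x+y) = f x + f y) \<and> (\<forall>c x. f (c *\<^sub>R x) = c * f x) \<and>
             (\<forall>x. \<bar>f x\<bar> \<le> norm x) \<and> f z = norm z"
proof -
  define G0 where "G0 = {(t *\<^sub>R z, t * norm z) | t. True}"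
  have g0: "hb_good z G0"
    unfolding hb_good_def G0_def
  proof (intro conjI allI impI)
    have "(0::'a, 0::real) = (0 *\<^sub>R z, 0 * norm z)" by simp
    thus "(0,0) \<in> {(t *\<^sub>R z, t * norm z) | t. True}" by blast
    have "(z, norm z) = (1 *\<^sub>R z, 1 * norm z)" by simp
    thus "(z, norm z) \<in> {(t *\<^sub>R z, t * norm z) | t. True}" by blast
  next
    fix x a y b assume "(x,a) \<in> {(t *\<^sub>R z, t * norm z) | t. True}" "(y,b) \<in> {(t *\<^sub>R z, t * norm z) | t. True}"
    then obtain s t where "x = s *\<^sub>R z" "a = s * norm z" "y = t *\<^sub>R z" "b = t * norm z" by blast
    thus "(x+y,a+b) \<in> {(t *\<^sub>R z, t * norm z) | t. True}"
      proof -
      have "(x+y,a+b) = ((s+t) *\<^sub>R z, (s+t) * norm z)" using \<open>x = _\<close> \<open>a = _\<close> \<open>y = _\<close> \<open>b = _\<close> by (simp add: algebra_simps)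
      thus ?thesis by blast
    qed
  next
    fix k x a assume "(x,a) \<in> {(t *\<^sub>R z, t * norm z) | t. True}"
    then obtain s where "x = s *\<^sub>R z" "a = s * norm z" by blast
    thus "(k *\<^sub>R x, k*a) \<in> {(t *\<^sub>R z, t * norm z) | t. True}"
      proof -
      have "(k *\<^sub>R x, k*a) = ((k * s) *\<^sub>R z, (k * s) * norm z)" using \<open>x = _\<close> \<open>a = _\<close> by simp
      thus ?thesis by blast
    qed
  next
    fix x a assume "(x,a) \<in> {(t *\<^sub>R z, t * norm z) | t. True}"
    then obtain s where "x = s *\<^sub>R z" "a = s * norm z" by blast
    thus "a \<le> norm x" by (simp add: mult_right_mono)
  qed
  have "\<exists>M\<in>{G. hb_good z G}. \<forall>X\<in>{G. hb_good z G}. M \<subseteq> X \<longrightarrow> X = M"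
  proof (rule Zorn_Lemma2, intro ballI)
    fix C assume C: "C \<in> chains {G. hb_good z G}"
    show "\<exists>U\<in>{G. hb_good z G}. \<forall>X\<in>C. X \<subseteq> U"
    proof (cases "C = {}")
      case True thus ?thesis using g0 by blast
    next
      case False
      have Cg: "\<And>G. G \<in> C \<Longrightarrow> hb_good z G" using C unfolding chains_def by blast
      have ch: "\<And>A B. A \<in> C \<Longrightarrow> B \<in> C \<Longrightarrow> A \<subseteq> B \<or> B \<subseteq> A" using C unfolding chains_def chain_subset_def by blast
      obtain G1 where G1: "G1 \<in> C" using False by blast
      have "hb_good z (\<Union>C)"
        unfolding hb_good_def
      proof (intro conjI allI impI)
        show "(0,0) \<in> \<Union>C" using G1 Cg[OF G1] unfolding hb_good_def by blast
        show "(z, norm z) \<in> \<Union>C" using G1 Cg[OF G1] unfolding hb_good_def by blast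
      next
        fix x a y b assume "(x,a) \<in> \<Union>C" "(y,b) \<in> \<Union>C"
        then obtain A B where AB: "A \<in> C" "B \<in> C" "(x,a)\<in>A" "(y,b)\<in>B" by blast
        show "(x+y,a+b) \<in> \<Union>C"
        proof (cases "A \<subseteq> B")
          case True thus ?thesis using AB Cg[of B] unfolding hb_good_def by blast
        next
          case False hence "B \<subseteq> A" using ch AB by blast
          thus ?thesis using AB Cg[of A] unfolding hb_good_def by blast
        qed
      next
        fix k x a assume "(x,a) \<in> \<Union>C"
        then obtain A where "A \<in> C" "(x,a)\<in>A" by blast
        thus "(k *\<^sub>R x, k*a) \<in> \<Union>C" using Cg[of A] unfolding hb_good_def by blast
      next
        fix x a assume "(x,a) \<in> \<Union>C"
        then obtain A where "A \<in> C" "(x,a)\<in>A" by blast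
        thus "a \<le> norm x" using Cg[of A] unfolding hb_good_def by blast
      qed
      thus ?thesis by blast
    qed
  qed
  then obtain M where gM: "hb_good z M" and maxM: "\<And>X. hb_good z X \<Longrightarrow> M \<subseteq> X \<Longrightarrow> X = M" by blast
  have tot: "\<exists>a. (w,a) \<in> M" for w
  proof (rule ccontr)
    assume "\<nexists>a. (w, a) \<in> M"
    then obtain M' where "hb_good z M'" "M \<subseteq> M'" "M' \<noteq> M" using hb_extend[OF gM] by blast
    thus False using maxM by blast
  qed
  define f where "f x = (SOME a. (x,a) \<in> M)" for x
  have fM: "(x, f x) \<in> M" for x unfolding f_def using tot by (rule someI_ex)
  have fu: "f x = a" if "(x,a)\<in>M" for x a using hb_good_unique[OF gM fM that] .
  have add: "f (x+y) = f x + f y" for x y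
    using gM fM fu unfolding hb_good_def by blast
  have scl: "f (c *\<^sub>R x) = c * f x" for c x
    using gM fM fu unfolding hb_good_def by blast
  have ub: "f x \<le> norm x" for x using gM fM unfolding hb_good_def by blast
  have "\<bar>f x\<bar> \<le> norm x" for x
    using ub[of x] ub[of "-1 *\<^sub>R x"] scl[of "-1" x] by simp
  moreover have "f z = norm z" using gM fu unfolding hb_good_def by blast
  ultimately show ?thesis using add scl by blast
qed

lemma sum_lessThan_concat: "(\<Sum>i<n+m. (f::nat\<Rightarrow>'c::comm_monoid_add) i) = (\<Sum>i<n. f i) + (\<Sum>i<m. f (n+i))"
  by (induction m) (auto simp: add.assoc)

lemma fv_zero: "(\<lambda>p. 0) \<in> free_vs" unfolding free_vs_def by simp
lemma fv_add: "a \<in> free_vs \<Longrightarrow> b \<in> free_vs \<Longrightarrow> (\<lambda>p. a p + b p) \<in> free_vs"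
  unfolding free_vs_def by (rule CollectI, erule CollectE, erule CollectE,
      rule finite_subset[of _ "{p. a p \<noteq> 0} \<union> {p. b p \<noteq> 0}"]) auto
lemma fv_scale: "a \<in> free_vs \<Longrightarrow> (\<lambda>p. c * a p) \<in> free_vs"
  unfolding free_vs_def by (rule CollectI, erule CollectE,
      rule finite_subset[of _ "{p. a p \<noteq> 0}"]) auto
lemma fv_diff: "a \<in> free_vs \<Longrightarrow> b \<in> free_vs \<Longrightarrow> (\<lambda>p. a p - b p) \<in> free_vs"
  using fv_add[of a "\<lambda>p. -1 * b p"] fv_scale[of b "-1"] by simp
lemma fv_delta: "delta x y \<in> free_vs"
  unfolding free_vs_def delta_def by (rule CollectI, rule finite_subset[of _ "{(x,y)}"]) auto
lemma fv_sum: "(\<And>i. i < (n::nat) \<Longrightarrow> r i \<in> free_vs) \<Longrightarrow> (\<lambda>p. \<Sum>i<n. c i * r i p) \<in> free_vs"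
proof (induction n)
  case 0 thus ?case using fv_zero by simp
next
  case (Suc n)
  have "(\<lambda>p. (\<Sum>i<n. c i * r i p) + c n * r n p) \<in> free_vs"
    using Suc by (intro fv_add fv_scale) auto
  thus ?case by simp
qed
lemma fv_sumd: "(\<lambda>p. \<Sum>i<(n::nat). delta (x i) (y i) p) \<in> free_vs"
proof -
  have "(\<lambda>p. \<Sum>i<n. 1 * delta (x i) (y i) p) \<in> free_vs" by (rule fv_sum) (rule fv_delta)
  thus ?thesis by simp
qed

lemma rels_fv: "r \<in> bilin_rels \<Longrightarrow> r \<in> free_vs"
  unfolding bilin_rels_def using fv_diff fv_delta fv_scale by fastforce

lemma null_fv: "w \<in> tensor_null \<Longrightarrow> w \<in> free_vs"
  unfolding tensor_null_def using fv_sum rels_fv by blast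

lemma null_zero: "(\<lambda>p. 0) \<in> tensor_null"
  unfolding tensor_null_def by (rule CollectI, rule exI[of _ 0]) simp

lemma null_rel: "r \<in> bilin_rels \<Longrightarrow> r \<in> tensor_null"
  unfolding tensor_null_def
  by (rule CollectI, rule exI[of _ 1], rule exI[of _ "\<lambda>i. 1"], rule exI[of _ "\<lambda>i. r"]) simp

lemma null_add: assumes "a \<in> tensor_null" "b \<in> tensor_null" shows "(\<lambda>p. a p + b p) \<in> tensor_null"
proof -
  obtain n :: nat and c r where a: "\<forall>i<n. r i \<in> bilin_rels" "a = (\<lambda>p. \<Sum>i<n. c i * r i p)"
    using assms(1) unfolding tensor_null_def by auto
  obtain m :: nat and d s where b: "\<forall>i<m. s i \<in> bilin_rels" "b = (\<lambda>p. \<Sum>i<m. d i * s i p)"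
    using assms(2) unfolding tensor_null_def by auto
  define cc where "cc i = (if i < n then c i else d (i - n))" for i
  define rr where "rr i = (if i < n then r i else s (i - n))" for i
  have "\<forall>i<n+m. rr i \<in> bilin_rels" using a b unfolding rr_def by auto
  moreover have "(\<lambda>p. a p + b p) = (\<lambda>p. \<Sum>i<n+m. cc i * rr i p)"
    unfolding sum_lessThan_concat a b cc_def rr_def by simp
  ultimately show ?thesis unfolding tensor_null_def by blast
qed

lemma null_scale: assumes "a \<in> tensor_null" shows "(\<lambda>p. k * a p) \<in> tensor_null"
proof -
  obtain n :: nat and c r where a: "\<forall>i<n. r i \<in> bilin_rels" "a = (\<lambda>p. \<Sum>i<n. c i * r i p)"
    using assms(1) unfolding tensor_null_def by auto
  have e: "(\<lambda>p. k * a p) = (\<lambda>p. \<Sum>i<n. (k * c i) * r i p)"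
    unfolding a by (simp add: sum_distrib_left mult.assoc)
  have "\<exists>(n::nat) c' r'. (\<forall>i<n. r' i \<in> bilin_rels) \<and> (\<lambda>p. k * a p) = (\<lambda>p. \<Sum>i<n. c' i * r' i p)"
    by (rule exI[of _ n], rule exI[of _ "\<lambda>i. k * c i"], rule exI[of _ r]) (use e a(1) in simp)
  thus ?thesis unfolding tensor_null_def by simp
qed

lemma null_diff: "a \<in> tensor_null \<Longrightarrow> b \<in> tensor_null \<Longrightarrow> (\<lambda>p. a p - b p) \<in> tensor_null"
  using null_add[of a "\<lambda>p. -1 * b p"] null_scale[of b "-1"] by simp

lemma null_sum: "(\<And>i. i < (n::nat) \<Longrightarrow> r i \<in> tensor_null) \<Longrightarrow> (\<lambda>p. \<Sum>i<n. r i p) \<in> tensor_null"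
proof (induction n)
  case 0 thus ?case using null_zero by simp
next
  case (Suc n)
  have "(\<lambda>p. (\<Sum>i<n. r i p) + r n p) \<in> tensor_null"
    using Suc by (intro null_add) auto
  thus ?case by simp
qed

lemma rel_scale1: "(\<lambda>p. c * delta x y p - delta (c *\<^sub>R x) y p) \<in> tensor_null"
proof -
  have "(\<lambda>p. delta (c *\<^sub>R x) y p - c * delta x y p) \<in> bilin_rels" unfolding bilin_rels_def by blast
  from null_scale[OF null_rel[OF this], of "-1"] show ?thesis by (simp add: algebra_simps)
qed

definition rep :: "('a::real_normed_vector \<times> 'b::real_normed_vector \<Rightarrow> real) \<Rightarrow> nat \<Rightarrow> (nat \<Rightarrow> 'a) \<Rightarrow> (nat \<Rightarrow> 'b) \<Rightarrow> bool" where
  "rep w n x y \<longleftrightarrow> (\<lambda>p. w p - (\<Sum>i<n. delta (x i) (y i) p)) \<in> tensor_null"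

lemma proj_norm_alt: "proj_norm w = Inf {(\<Sum>i<n. norm (x i) * norm (y i)) | n x y. rep w n x y}"
  unfolding proj_norm_def rep_def by simp

lemma rep_exists_aux:
  assumes "finite S" shows "\<forall>w. {p. w p \<noteq> 0} \<subseteq> S \<longrightarrow> (\<exists>n x y. rep (w::'a::real_normed_vector \<times> 'b::real_normed_vector \<Rightarrow> real) n x y)"
  using assms
proof (induction S rule: finite_induct)
  case empty
  show ?case
  proof (intro allI impI)
    fix w :: "'a \<times> 'b \<Rightarrow> real" assume "{p. w p \<noteq> 0} \<subseteq> {}"
    hence "w = (\<lambda>p. 0)" by auto
    thus "\<exists>n x y. rep w n x y" unfolding rep_def using null_zero by (intro exI[of _ 0]) simp
  qed
next
  case (insert q S)
  show ?case
  proof (intro allI impI)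
    fix w :: "'a \<times> 'b \<Rightarrow> real" assume sw: "{p. w p \<noteq> 0} \<subseteq> insert q S"
    define w' where "w' = (\<lambda>p. w p - w q * delta (fst q) (snd q) p)"
    have "{p. w' p \<noteq> 0} \<subseteq> S" using sw insert(2) unfolding w'_def delta_def by auto
    then obtain n x y where r: "rep w' n x y" using insert(3) by blast
    define xx where "xx i = (if i < n then x i else w q *\<^sub>R fst q)" for i
    define yy where "yy i = (if i < n then y i else snd q)" for i
    have eq: "(\<lambda>p. w p - (\<Sum>i<Suc n. delta (xx i) (yy i) p)) =
       (\<lambda>p. (w' p - (\<Sum>i<n. delta (x i) (y i) p)) + (w q * delta (fst q) (snd q) p - delta (w q *\<^sub>R fst q) (snd q) p))"
      unfolding w'_def xx_def yy_def by (auto simp: algebra_simps)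
    have "(\<lambda>p. w p - (\<Sum>i<Suc n. delta (xx i) (yy i) p)) \<in> tensor_null"
      unfolding eq using r rel_scale1 unfolding rep_def by (intro null_add) auto
    thus "\<exists>n x y. rep w n x y" unfolding rep_def by blast
  qed
qed

lemma rep_exists: "w \<in> free_vs \<Longrightarrow> \<exists>n x y. rep w n x y"
  using rep_exists_aux[of "{p. w p \<noteq> 0}"] unfolding free_vs_def by blast

lemma rep_add: assumes "rep v n x y" "rep w m x' y'"
  shows "rep (\<lambda>p. v p + w p) (n+m) (\<lambda>i. if i < n then x i else x' (i - n)) (\<lambda>i. if i < n then y i else y' (i - n))"
proof -
  have "(\<lambda>p. (v p - (\<Sum>i<n. delta (x i) (y i) p)) + (w p - (\<Sum>i<m. delta (x' i) (y' i) p))) \<in> tensor_null"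
    using assms unfolding rep_def by (rule null_add)
  thus ?thesis unfolding rep_def sum_lessThan_concat by (simp add: algebra_simps)
qed

lemma rep_scale: assumes "rep w n x y"
  shows "rep (\<lambda>p. c * w p) n (\<lambda>i. c *\<^sub>R x i) y"
proof -
  have A: "(\<lambda>p. c * (w p - (\<Sum>i<n. delta (x i) (y i) p)) + (\<Sum>i<n. c * delta (x i) (y i) p - delta (c *\<^sub>R x i) (y i) p)) \<in> tensor_null"
      proof -
    have B1: "(\<lambda>p. c * (w p - (\<Sum>i<n. delta (x i) (y i) p))) \<in> tensor_null"
      using null_scale[OF assms[unfolded rep_def], of c] .
    have B2: "(\<lambda>p. \<Sum>i<n. c * delta (x i) (y i) p - delta (c *\<^sub>R x i) (y i) p) \<in> tensor_null"
      using null_sum[of n "\<lambda>i p. c * delta (x i) (y i) p - delta (c *\<^sub>R x i) (y i) p"] rel_scale1 by blast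
    show ?thesis using null_add[OF B1 B2] .
  qed
  have E: "(\<lambda>p. c * (w p - (\<Sum>i<n. delta (x i) (y i) p)) + (\<Sum>i<n. c * delta (x i) (y i) p - delta (c *\<^sub>R x i) (y i) p))
     = (\<lambda>p. c * w p - (\<Sum>i<n. delta (c *\<^sub>R x i) (y i) p))"
  proof
    fix p
    show "c * (w p - (\<Sum>i<n. delta (x i) (y i) p)) + (\<Sum>i<n. c * delta (x i) (y i) p - delta (c *\<^sub>R x i) (y i) p)
       = c * w p - (\<Sum>i<n. delta (c *\<^sub>R x i) (y i) p)"
      by (simp only: sum_subtractf right_diff_distrib sum_distrib_left)
  qed
  show ?thesis using A unfolding E rep_def .
qed

lemma rep_delta: "rep (delta x y) 1 (\<lambda>i. x) (\<lambda>i. y)"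
  unfolding rep_def using null_zero by simp

lemma rep_null: "w \<in> tensor_null \<Longrightarrow> rep w 0 x y"
  unfolding rep_def by simp

definition RS :: "('a::real_normed_vector \<times> 'b::real_normed_vector \<Rightarrow> real) \<Rightarrow> real set" where
  "RS w = {(\<Sum>i<n. norm (x i) * norm (y i)) | n x y. rep w n x y}"

lemma pn_RS: "proj_norm w = Inf (RS w)" unfolding proj_norm_alt RS_def ..

lemma RS_bdd: "bdd_below (RS w)"
  unfolding RS_def bdd_below_def by (rule exI[of _ 0]) (auto intro: sum_nonneg)

lemma RS_ne: "w \<in> free_vs \<Longrightarrow> RS w \<noteq> {}"
  using rep_exists unfolding RS_def by blast

lemma pn_le: "rep w n x y \<Longrightarrow> proj_norm w \<le> (\<Sum>i<n. norm (x i) * norm (y i))"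
  unfolding pn_RS by (rule cInf_lower[OF _ RS_bdd]) (auto simp: RS_def)

lemma pn_ge: assumes "w \<in> free_vs" "\<And>n x y. rep w n x y \<Longrightarrow> r \<le> (\<Sum>i<n. norm (x i) * norm (y i))"
  shows "r \<le> proj_norm w"
  unfolding pn_RS using assms RS_ne[OF assms(1)] by (intro cInf_greatest) (auto simp: RS_def)

lemma pn_nonneg: "w \<in> free_vs \<Longrightarrow> 0 \<le> proj_norm w"
  by (rule pn_ge) (auto intro: sum_nonneg)

lemma pn_null: "w \<in> tensor_null \<Longrightarrow> proj_norm w = 0"
  using pn_le[OF rep_null[of w "\<lambda>i. 0" "\<lambda>i. 0"]] pn_nonneg[OF null_fv] by force

lemma pn_zero: "proj_norm (\<lambda>p. 0) = 0" using pn_null[OF null_zero] .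

lemma pn_delta: "proj_norm (delta x y) \<le> norm x * norm y"
  using pn_le[OF rep_delta] by simp

lemma pn_add: assumes "v \<in> free_vs" "w \<in> free_vs"
  shows "proj_norm (\<lambda>p. v p + w p) \<le> proj_norm v + proj_norm w"
proof -
  have key: "proj_norm (\<lambda>p. v p + w p) \<le> a + b" if A: "a \<in> RS v" and B: "b \<in> RS w" for a b
  proof -
    obtain n :: nat and x y where a: "rep v n x y" "a = (\<Sum>i<n. norm (x i) * norm (y i))" using A unfolding RS_def by blast
    obtain m :: nat and x' y' where b: "rep w m x' y'" "b = (\<Sum>i<m. norm (x' i) * norm (y' i))" using B unfolding RS_def by blast
    from pn_le[OF rep_add[OF a(1) b(1)]] show ?thesis
      unfolding a(2) b(2) sum_lessThan_concat by simp
  qed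
  have "proj_norm (\<lambda>p. v p + w p) - b \<le> proj_norm v" if "b \<in> RS w" for b
    unfolding pn_RS[of v] using RS_ne[OF assms(1)] key that by (intro cInf_greatest) force+
  hence "proj_norm (\<lambda>p. v p + w p) - proj_norm v \<le> proj_norm w"
    unfolding pn_RS[of w] using RS_ne[OF assms(2)] by (intro cInf_greatest) force+
  thus ?thesis by simp
qed

lemma pn_scale: assumes "w \<in> free_vs"
  shows "proj_norm (\<lambda>p. c * w p) \<le> \<bar>c\<bar> * proj_norm w"
proof (cases "c = 0")
  case True thus ?thesis by (simp add: pn_zero)
next
  case False
  have "proj_norm (\<lambda>p. c * w p) / \<bar>c\<bar> \<le> a" if A: "a \<in> RS w" for a
  proof -
    obtain n :: nat and x y where a: "rep w n x y" "a = (\<Sum>i<n. norm (x i) * norm (y i))" using A unfolding RS_def by blast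
    have "proj_norm (\<lambda>p. c * w p) \<le> (\<Sum>i<n. norm (c *\<^sub>R x i) * norm (y i))" using pn_le[OF rep_scale[OF a(1)]] .
    also have "\<dots> = \<bar>c\<bar> * a" unfolding a(2) by (simp add: sum_distrib_left mult.assoc)
    finally show ?thesis using False by (simp add: field_simps)
  qed
  hence "proj_norm (\<lambda>p. c * w p) / \<bar>c\<bar> \<le> proj_norm w"
    unfolding pn_RS[of w] using RS_ne[OF assms] by (intro cInf_greatest) auto
  thus ?thesis using False by (simp add: field_simps)
qed

lemma pn_diff_le: assumes "v \<in> free_vs" "w \<in> free_vs"
  shows "proj_norm (\<lambda>p. v p - w p) \<le> proj_norm (\<lambda>p. w p - v p)"
  using pn_scale[OF fv_diff[OF assms(2,1)], of "-1"] by simp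

lemma pn_diff_sym: assumes "v \<in> free_vs" "w \<in> free_vs"
  shows "proj_norm (\<lambda>p. v p - w p) = proj_norm (\<lambda>p. w p - v p)"
  using pn_diff_le[OF assms] pn_diff_le[OF assms(2,1)] by simp

lemma pn_lip: assumes "v \<in> free_vs" "w \<in> free_vs"
  shows "\<bar>proj_norm v - proj_norm w\<bar> \<le> proj_norm (\<lambda>p. v p - w p)"
proof -
  have "proj_norm v \<le> proj_norm (\<lambda>p. v p - w p) + proj_norm w"
    using pn_add[OF fv_diff[OF assms] assms(2)] by simp
  moreover have "proj_norm w \<le> proj_norm (\<lambda>p. w p - v p) + proj_norm v"
    using pn_add[OF fv_diff[OF assms(2,1)] assms(1)] by simp
  ultimately show ?thesis using pn_diff_sym[OF assms] by linarith
qed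

definition Bt :: "('a \<Rightarrow> 'b \<Rightarrow> real) \<Rightarrow> ('a \<times> 'b \<Rightarrow> real) \<Rightarrow> real" where
  "Bt B w = (\<Sum>p\<in>{p. w p \<noteq> 0}. w p * B (fst p) (snd p))"

lemma Bt_sub: assumes "finite S" "{p. w p \<noteq> 0} \<subseteq> S"
  shows "Bt B w = (\<Sum>p\<in>S. w p * B (fst p) (snd p))"
  unfolding Bt_def using assms by (intro sum.mono_neutral_left) auto

lemma Bt_add: assumes "v \<in> free_vs" "w \<in> free_vs"
  shows "Bt B (\<lambda>p. v p + w p) = Bt B v + Bt B w"
proof -
  let ?S = "{p. v p \<noteq> 0} \<union> {p. w p \<noteq> 0}"
  have f: "finite ?S" using assms unfolding free_vs_def by auto
  have "Bt B (\<lambda>p. v p + w p) = (\<Sum>p\<in>?S. (v p + w p) * B (fst p) (snd p))"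
    using f by (intro Bt_sub) auto
  also have "\<dots> = (\<Sum>p\<in>?S. v p * B (fst p) (snd p)) + (\<Sum>p\<in>?S. w p * B (fst p) (snd p))"
    by (simp add: distrib_right sum.distrib)
  also have "\<dots> = Bt B v + Bt B w"
    using f by (simp add: Bt_sub[of ?S v] Bt_sub[of ?S w])
  finally show ?thesis .
qed

lemma Bt_scale: assumes "w \<in> free_vs"
  shows "Bt B (\<lambda>p. c * w p) = c * Bt B w"
proof -
  let ?S = "{p. w p \<noteq> 0}"
  have f: "finite ?S" using assms unfolding free_vs_def by auto
  have "Bt B (\<lambda>p. c * w p) = (\<Sum>p\<in>?S. (c * w p) * B (fst p) (snd p))"
    using f by (intro Bt_sub) auto
  also have "\<dots> = c * Bt B w" unfolding Bt_def by (simp add: sum_distrib_left mult.assoc)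
  finally show ?thesis .
qed

lemma Bt_diff: assumes "v \<in> free_vs" "w \<in> free_vs"
  shows "Bt B (\<lambda>p. v p - w p) = Bt B v - Bt B w"
  using Bt_add[OF assms(1) fv_scale[OF assms(2), of "-1"], of B] Bt_scale[OF assms(2), of B "-1"] by simp

lemma Bt_delta: "Bt B (delta x y) = B x y"
  by (subst Bt_sub[of "{(x,y)}"]) (auto simp: delta_def)

lemma Bt_sum: assumes "\<And>i. i < n \<Longrightarrow> r i \<in> free_vs"
  shows "Bt B (\<lambda>p. \<Sum>i<(n::nat). c i * r i p) = (\<Sum>i<n. c i * Bt B (r i))"
  using assms
proof (induction n)
  case 0
  have "Bt B (\<lambda>p. 0) = 0" unfolding Bt_def by simp
  thus ?case by simp
next
  case (Suc n)
  have "Bt B (\<lambda>p. \<Sum>i<Suc n. c i * r i p) = Bt B (\<lambda>p. (\<Sum>i<n. c i * r i p) + c n * r n p)" by simp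
  also have "\<dots> = Bt B (\<lambda>p. \<Sum>i<n. c i * r i p) + Bt B (\<lambda>p. c n * r n p)"
    using Suc.prems by (intro Bt_add fv_sum fv_scale) auto
  also have "\<dots> = (\<Sum>i<Suc n. c i * Bt B (r i))"
    using Suc by (simp add: Bt_scale)
  finally show ?case .
qed

definition bil :: "('a::real_vector \<Rightarrow> 'b::real_vector \<Rightarrow> real) \<Rightarrow> bool" where
  "bil B \<longleftrightarrow> (\<forall>x x' y. B (x+x') y = B x y + B x' y) \<and> (\<forall>x y y'. B x (y+y') = B x y + B x y') \<and>
     (\<forall>c x y. B (c *\<^sub>R x) y = c * B x y) \<and> (\<forall>c x y. B x (c *\<^sub>R y) = c * B x y)"

lemma Bt_rel: assumes "bil B" "r \<in> bilin_rels" shows "Bt B r = 0"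
proof -
  have d3: "Bt B (\<lambda>p. delta a b p - delta a' b' p - delta a'' b'' p) = B a b - B a' b' - B a'' b''" for a b a' b' a'' b''
    by (simp add: Bt_diff fv_diff fv_delta Bt_delta)
  have d2: "Bt B (\<lambda>p. delta a b p - c * delta a' b' p) = B a b - c * B a' b'" for a b a' b' c
    by (simp add: Bt_diff fv_scale fv_delta Bt_delta Bt_scale)
  show ?thesis using assms(2) unfolding bilin_rels_def
    using assms(1) unfolding bil_def by (auto simp: d3 d2)
qed

lemma Bt_null: assumes "bil B" "w \<in> tensor_null" shows "Bt B w = 0"
proof -
  obtain n :: nat and c r where a: "\<forall>i<n. r i \<in> bilin_rels" "w = (\<lambda>p. \<Sum>i<n. c i * r i p)"
    using assms(2) unfolding tensor_null_def by auto
  show ?thesis unfolding a(2) using a(1) rels_fv Bt_rel[OF assms(1)] by (subst Bt_sum) auto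
qed

lemma Bt_sumd: "Bt B (\<lambda>p. \<Sum>i<(n::nat). delta (x i) (y i) p) = (\<Sum>i<n. B (x i) (y i))"
  using Bt_sum[of n "\<lambda>i. delta (x i) (y i)" B "\<lambda>i. 1"] by (simp add: Bt_delta fv_delta)

lemma Bt_rep: assumes "bil B" "rep w n x y" "w \<in> free_vs"
  shows "Bt B w = (\<Sum>i<n. B (x i) (y i))"
proof -
  have "Bt B (\<lambda>p. w p - (\<Sum>i<n. delta (x i) (y i) p)) = 0"
    using Bt_null[OF assms(1)] assms(2) unfolding rep_def by blast
  hence "Bt B w - Bt B (\<lambda>p. \<Sum>i<n. delta (x i) (y i) p) = 0"
    using Bt_diff[OF assms(3) fv_sumd] by simp
  thus ?thesis using Bt_sumd by simp
qed

lemma Bt_le_pn: assumes "bil B" "\<And>x y. B x y \<le> norm x * norm y" "w \<in> free_vs"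
  shows "Bt B w \<le> proj_norm w"
proof (rule pn_ge[OF assms(3)])
  fix n x y assume r: "rep w n x y"
  show "Bt B w \<le> (\<Sum>i<n. norm (x i) * norm (y i))"
    unfolding Bt_rep[OF assms(1) r assms(3)] by (rule sum_mono) (rule assms(2))
qed

lemma pt_carrier: "s \<in> carrier (proj_tensor TYPE('a::real_normed_vector) TYPE('b::real_normed_vector)) \<longleftrightarrow>
   (\<forall>n. s n \<in> free_vs) \<and> (\<forall>e>0. \<exists>M. \<forall>m\<ge>M. \<forall>n\<ge>M. proj_norm (\<lambda>p. s m p - s n p) < e)"
  by (simp add: proj_tensor_def)

lemma pt_ops [simp]:
  "vadd (proj_tensor TYPE('a::real_normed_vector) TYPE('b::real_normed_vector)) = (\<lambda>s t n p. s n p + t n p)"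
  "vscale (proj_tensor TYPE('a::real_normed_vector) TYPE('b::real_normed_vector)) = (\<lambda>c s n p. c * s n p)"
  "vzero (proj_tensor TYPE('a::real_normed_vector) TYPE('b::real_normed_vector)) = (\<lambda>n p. 0)"
  "vnorm (proj_tensor TYPE('a::real_normed_vector) TYPE('b::real_normed_vector)) = (\<lambda>s. lim (\<lambda>n. proj_norm (s n)))"
  by (simp_all add: proj_tensor_def)

lemma pt_conv: assumes "s \<in> carrier (proj_tensor TYPE('a::real_normed_vector) TYPE('b::real_normed_vector))"
  shows "(\<lambda>n. proj_norm (s n)) \<longlonglongrightarrow> vnorm (proj_tensor TYPE('a) TYPE('b)) s"
proof -
  have fv: "\<And>n. s n \<in> free_vs" and C: "\<And>e. e>0 \<Longrightarrow> \<exists>M. \<forall>m\<ge>M. \<forall>n\<ge>M. proj_norm (\<lambda>p. s m p - s n p) < e"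
    using assms unfolding pt_carrier by auto
  have "Cauchy (\<lambda>n. proj_norm (s n))"
  proof (rule metric_CauchyI)
    fix e :: real assume "e > 0"
    then obtain M where M: "\<forall>m\<ge>M. \<forall>n\<ge>M. proj_norm (\<lambda>p. s m p - s n p) < e" using C by blast
    show "\<exists>M. \<forall>m\<ge>M. \<forall>n\<ge>M. dist (proj_norm (s m)) (proj_norm (s n)) < e"
    proof (intro exI allI impI)
      fix m n assume "M \<le> m" "M \<le> n"
      thus "dist (proj_norm (s m)) (proj_norm (s n)) < e"
        using pn_lip[OF fv fv, of m n] M unfolding dist_real_def by fastforce
    qed
  qed
  hence "convergent (\<lambda>n. proj_norm (s n))" by (rule Cauchy_convergent)
  thus ?thesis by (simp add: convergent_LIMSEQ_iff)
qed

lemma pt_const: assumes "w \<in> free_vs"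
  shows "(\<lambda>n. w) \<in> carrier (proj_tensor TYPE('a::real_normed_vector) TYPE('b::real_normed_vector))"
    and "vnorm (proj_tensor TYPE('a) TYPE('b)) (\<lambda>n. w) = proj_norm w"
  using assms by (auto simp: pt_carrier pn_zero intro!: limI)

lemma pt_add_in: assumes "s \<in> carrier (proj_tensor TYPE('a::real_normed_vector) TYPE('b::real_normed_vector))"
  "t \<in> carrier (proj_tensor TYPE('a) TYPE('b))"
  shows "(\<lambda>n p. s n p + t n p) \<in> carrier (proj_tensor TYPE('a) TYPE('b))"
proof -
  have fs: "\<And>n. s n \<in> free_vs" and Cs: "\<And>e. e>0 \<Longrightarrow> \<exists>M. \<forall>m\<ge>M. \<forall>n\<ge>M. proj_norm (\<lambda>p. s m p - s n p) < e"
    using assms(1) unfolding pt_carrier by auto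
  have ft: "\<And>n. t n \<in> free_vs" and Ct: "\<And>e. e>0 \<Longrightarrow> \<exists>M. \<forall>m\<ge>M. \<forall>n\<ge>M. proj_norm (\<lambda>p. t m p - t n p) < e"
    using assms(2) unfolding pt_carrier by auto
  show ?thesis unfolding pt_carrier
  proof (intro conjI allI impI)
    fix n show "(\<lambda>p. s n p + t n p) \<in> free_vs" using fs ft by (rule fv_add)
  next
    fix e :: real assume e: "e > 0"
    obtain M1 where M1: "\<forall>m\<ge>M1. \<forall>n\<ge>M1. proj_norm (\<lambda>p. s m p - s n p) < e/2" using Cs e by (meson half_gt_zero)
    obtain M2 where M2: "\<forall>m\<ge>M2. \<forall>n\<ge>M2. proj_norm (\<lambda>p. t m p - t n p) < e/2" using Ct e by (meson half_gt_zero)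
    show "\<exists>M. \<forall>m\<ge>M. \<forall>n\<ge>M. proj_norm (\<lambda>p. s m p + t m p - (s n p + t n p)) < e"
    proof (intro exI[of _ "max M1 M2"] allI impI)
      fix m n assume "max M1 M2 \<le> m" "max M1 M2 \<le> n"
      hence a: "proj_norm (\<lambda>p. s m p - s n p) < e/2" "proj_norm (\<lambda>p. t m p - t n p) < e/2" using M1 M2 by auto
      have eq: "(\<lambda>p. s m p + t m p - (s n p + t n p)) = (\<lambda>p. (s m p - s n p) + (t m p - t n p))"
        by (auto simp: algebra_simps)
      show "proj_norm (\<lambda>p. s m p + t m p - (s n p + t n p)) < e"
        unfolding eq using pn_add[OF fv_diff[OF fs fs] fv_diff[OF ft ft], of m n m n] a by simp
    qed
  qed
qed

lemma pt_scale_in: assumes "s \<in> carrier (proj_tensor TYPE('a::real_normed_vector) TYPE('b::real_normed_vector))"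
  shows "(\<lambda>n p. c * s n p) \<in> carrier (proj_tensor TYPE('a) TYPE('b))"
proof -
  have fs: "\<And>n. s n \<in> free_vs" and Cs: "\<And>e. e>0 \<Longrightarrow> \<exists>M. \<forall>m\<ge>M. \<forall>n\<ge>M. proj_norm (\<lambda>p. s m p - s n p) < e"
    using assms(1) unfolding pt_carrier by auto
  show ?thesis unfolding pt_carrier
  proof (intro conjI allI impI)
    fix n show "(\<lambda>p. c * s n p) \<in> free_vs" using fs by (rule fv_scale)
  next
    fix e :: real assume e: "e > 0"
    have "e / (\<bar>c\<bar> + 1) > 0" using e by simp
    then obtain M where M: "\<forall>m\<ge>M. \<forall>n\<ge>M. proj_norm (\<lambda>p. s m p - s n p) < e / (\<bar>c\<bar> + 1)" using Cs by blast
    show "\<exists>M. \<forall>m\<ge>M. \<forall>n\<ge>M. proj_norm (\<lambda>p. c * s m p - c * s n p) < e"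
    proof (intro exI[of _ M] allI impI)
      fix m n assume "M \<le> m" "M \<le> n"
      hence a: "proj_norm (\<lambda>p. s m p - s n p) < e / (\<bar>c\<bar> + 1)" using M by auto
      have eq: "(\<lambda>p. c * s m p - c * s n p) = (\<lambda>p. c * (s m p - s n p))"
        by (auto simp: algebra_simps)
      have "proj_norm (\<lambda>p. c * s m p - c * s n p) \<le> \<bar>c\<bar> * proj_norm (\<lambda>p. s m p - s n p)"
        unfolding eq by (rule pn_scale[OF fv_diff[OF fs fs]])
      also have "\<dots> \<le> \<bar>c\<bar> * (e / (\<bar>c\<bar> + 1))" using a by (intro mult_left_mono) auto
      also have "\<dots> < e" using e by (simp add: field_simps)
      finally show "proj_norm (\<lambda>p. c * s m p - c * s n p) < e" .
    qed
  qed
qed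

lemma pt_vnorm_add: assumes "s \<in> carrier (proj_tensor TYPE('a::real_normed_vector) TYPE('b::real_normed_vector))"
  "t \<in> carrier (proj_tensor TYPE('a) TYPE('b))"
  shows "vnorm (proj_tensor TYPE('a) TYPE('b)) (\<lambda>n p. s n p + t n p) \<le> vnorm (proj_tensor TYPE('a) TYPE('b)) s + vnorm (proj_tensor TYPE('a) TYPE('b)) t"
proof (rule LIMSEQ_le[OF pt_conv[OF pt_add_in[OF assms]] tendsto_add[OF pt_conv[OF assms(1)] pt_conv[OF assms(2)]]])
  have fs: "\<And>n. s n \<in> free_vs" "\<And>n. t n \<in> free_vs" using assms unfolding pt_carrier by auto
  show "\<exists>N. \<forall>n\<ge>N. proj_norm (\<lambda>p. s n p + t n p) \<le> proj_norm (s n) + proj_norm (t n)"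
    using pn_add[OF fs(1) fs(2)] by blast
qed

lemma pt_vnorm_scale: assumes "s \<in> carrier (proj_tensor TYPE('a::real_normed_vector) TYPE('b::real_normed_vector))"
  shows "vnorm (proj_tensor TYPE('a) TYPE('b)) (\<lambda>n p. c * s n p) \<le> \<bar>c\<bar> * vnorm (proj_tensor TYPE('a) TYPE('b)) s"
proof (rule LIMSEQ_le[OF pt_conv[OF pt_scale_in[OF assms]] tendsto_mult[OF tendsto_const pt_conv[OF assms]]])
  have fs: "\<And>n. s n \<in> free_vs" using assms unfolding pt_carrier by auto
  show "\<exists>N. \<forall>n\<ge>N. proj_norm (\<lambda>p. c * s n p) \<le> \<bar>c\<bar> * proj_norm (s n)"
    using pn_scale[OF fs] by blast
qed

lemma pt_vnorm_nonneg: assumes "s \<in> carrier (proj_tensor TYPE('a::real_normed_vector) TYPE('b::real_normed_vector))"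
  shows "0 \<le> vnorm (proj_tensor TYPE('a) TYPE('b)) s"
proof (rule LIMSEQ_le_const[OF pt_conv[OF assms]])
  have fs: "\<And>n. s n \<in> free_vs" using assms unfolding pt_carrier by auto
  show "\<exists>N. \<forall>n\<ge>N. 0 \<le> proj_norm (s n)" using pn_nonneg[OF fs] by blast
qed

lemma lincomb_pt: "lincomb (proj_tensor TYPE('a::real_normed_vector) TYPE('b::real_normed_vector)) n l u = (\<lambda>m p. \<Sum>i<n. l i * u i m p)"
  by (induction n) auto

lemma lincomb_pt_in: assumes "\<And>i. i < n \<Longrightarrow> u i \<in> carrier (proj_tensor TYPE('a::real_normed_vector) TYPE('b::real_normed_vector))"
  shows "lincomb (proj_tensor TYPE('a) TYPE('b)) n l u \<in> carrier (proj_tensor TYPE('a) TYPE('b))"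
  using assms
proof (induction n)
  case 0
  have "(\<lambda>n p. 0) \<in> carrier (proj_tensor TYPE('a) TYPE('b))" using pt_const(1)[OF fv_zero] .
  thus ?case by simp
next
  case (Suc n)
  have "vadd (proj_tensor TYPE('a) TYPE('b)) (lincomb (proj_tensor TYPE('a) TYPE('b)) n l u) (vscale (proj_tensor TYPE('a) TYPE('b)) (l n) (u n))
      \<in> carrier (proj_tensor TYPE('a) TYPE('b))"
    unfolding pt_ops using Suc by (intro pt_add_in pt_scale_in) auto
  thus ?case by simp
qed

lemma lincomb_pt_norm: assumes "\<And>i. i < n \<Longrightarrow> u i \<in> carrier (proj_tensor TYPE('a::real_normed_vector) TYPE('b::real_normed_vector))"
  "\<And>i. i < n \<Longrightarrow> 0 \<le> l i"
  shows "vnorm (proj_tensor TYPE('a) TYPE('b)) (lincomb (proj_tensor TYPE('a) TYPE('b)) n l u) \<le> (\<Sum>i<n. l i * vnorm (proj_tensor TYPE('a) TYPE('b)) (u i))"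
  using assms
proof (induction n)
  case 0
  have "vnorm (proj_tensor TYPE('a) TYPE('b)) (\<lambda>n p. 0) = 0" using pt_const(2)[OF fv_zero] pn_zero by simp
  thus ?case by simp
next
  case (Suc n)
  let ?P = "proj_tensor TYPE('a) TYPE('b)"
  have inL: "lincomb ?P n l u \<in> carrier ?P" using Suc.prems by (intro lincomb_pt_in) auto
  have inU: "u n \<in> carrier ?P" using Suc.prems by auto
  have "vnorm ?P (lincomb ?P (Suc n) l u) = vnorm ?P (\<lambda>m p. lincomb ?P n l u m p + l n * u n m p)" by simp
  also have "\<dots> \<le> vnorm ?P (lincomb ?P n l u) + vnorm ?P (\<lambda>m p. l n * u n m p)"
    using pt_vnorm_add[OF inL pt_scale_in[OF inU]] by simp
  also have "vnorm ?P (\<lambda>m p. l n * u n m p) \<le> l n * vnorm ?P (u n)"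
    using pt_vnorm_scale[OF inU, of "l n"] Suc.prems(2)[of n] by simp
  also have "vnorm ?P (lincomb ?P n l u) \<le> (\<Sum>i<n. l i * vnorm ?P (u i))" using Suc by auto
  finally show ?case by simp
qed

lemma lincomb_ns: "lincomb (normed_space_of TYPE('c::real_normed_vector)) n l x = (\<Sum>i<n. l i *\<^sub>R x i)"
  by (induction n) (auto simp: normed_space_of_def)

locale dT =
  fixes f :: "(nat \<Rightarrow> 'a::real_normed_vector \<times> 'b::real_normed_vector \<Rightarrow> real) \<Rightarrow> real"
  assumes du: "dual_unit (proj_tensor TYPE('a) TYPE('b)) f"
begin

abbreviation "P \<equiv> proj_tensor TYPE('a) TYPE('b)"
abbreviation "C \<equiv> carrier P"

lemma fadd: "u \<in> C \<Longrightarrow> v \<in> C \<Longrightarrow> f (\<lambda>n p. u n p + v n p) = f u + f v"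
  using du unfolding dual_unit_def by simp

lemma fscale: "v \<in> C \<Longrightarrow> f (\<lambda>n p. c * v n p) = c * f v"
  using du unfolding dual_unit_def by simp

lemma fbound: obtains K where "K \<ge> 0" "\<And>v. v \<in> C \<Longrightarrow> \<bar>f v\<bar> \<le> K * vnorm P v"
proof -
  obtain K where K: "\<And>v. v \<in> C \<Longrightarrow> \<bar>f v\<bar> \<le> K * vnorm P v" using du unfolding dual_unit_def by blast
  have "\<bar>f v\<bar> \<le> \<bar>K\<bar> * vnorm P v" if "v \<in> C" for v
  proof -
    have "K * vnorm P v \<le> \<bar>K\<bar> * vnorm P v" using pt_vnorm_nonneg[OF that] by (intro mult_right_mono) auto
    thus ?thesis using K[OF that] by linarith
  qed
  thus ?thesis using that[of "\<bar>K\<bar>"] by simp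
qed

lemma fSUP: "(SUP v\<in>{v\<in>C. vnorm P v \<le> 1}. f v) = 1"
  using du unfolding dual_unit_def by blast

definition phi :: "('a \<times> 'b \<Rightarrow> real) \<Rightarrow> real" where "phi w = f (\<lambda>n. w)"

lemma phi_add: "v \<in> free_vs \<Longrightarrow> w \<in> free_vs \<Longrightarrow> phi (\<lambda>p. v p + w p) = phi v + phi w"
  unfolding phi_def using fadd[OF pt_const(1) pt_const(1)] by simp

lemma phi_scale: "w \<in> free_vs \<Longrightarrow> phi (\<lambda>p. c * w p) = c * phi w"
  unfolding phi_def using fscale[OF pt_const(1)] by simp

lemma phi_bound: obtains K where "K \<ge> 0" "\<And>w. w \<in> free_vs \<Longrightarrow> \<bar>phi w\<bar> \<le> K * proj_norm w"
proof -
  obtain K where K: "K \<ge> 0" "\<And>v. v \<in> C \<Longrightarrow> \<bar>f v\<bar> \<le> K * vnorm P v" using fbound by blast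
  have "\<bar>phi w\<bar> \<le> K * proj_norm w" if "w \<in> free_vs" for w
    unfolding phi_def using K(2)[OF pt_const(1)[OF that]] pt_const(2)[OF that] by simp
  thus ?thesis using that K(1) by blast
qed

lemma phi_null: "w \<in> tensor_null \<Longrightarrow> phi w = 0"
proof -
  assume n: "w \<in> tensor_null"
  obtain K where K: "K \<ge> 0" "\<And>w. w \<in> free_vs \<Longrightarrow> \<bar>phi w\<bar> \<le> K * proj_norm w" using phi_bound by blast
  show ?thesis using K(2)[OF null_fv[OF n]] pn_null[OF n] by simp
qed

lemma phi_eq: assumes "a \<in> free_vs" "b \<in> free_vs" "(\<lambda>p. a p - b p) \<in> tensor_null"
  shows "phi a = phi b"
proof -
  have "phi (\<lambda>p. (a p - b p) + b p) = phi (\<lambda>p. a p - b p) + phi b"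
    by (rule phi_add[OF fv_diff[OF assms(1,2)] assms(2)])
  thus ?thesis using phi_null[OF assms(3)] by simp
qed

definition psi :: "'a \<Rightarrow> 'b \<Rightarrow> real" where "psi x y = phi (delta x y)"

lemma psi_bil: "bil psi"
  unfolding bil_def
proof (intro conjI allI)
  fix x x' :: 'a and y :: 'b
  have r: "(\<lambda>p. delta (x + x') y p - delta x y p - delta x' y p) \<in> tensor_null"
    by (rule null_rel) (unfold bilin_rels_def, blast)
  have "phi (delta (x + x') y) = phi (\<lambda>p. delta x y p + delta x' y p)"
    using r by (intro phi_eq fv_delta fv_add) (simp_all add: diff_diff_eq)
  thus "psi (x + x') y = psi x y + psi x' y" unfolding psi_def by (simp add: phi_add fv_delta)
next
  fix x :: 'a and y y' :: 'b
  have r: "(\<lambda>p. delta x (y + y') p - delta x y p - delta x y' p) \<in> tensor_null"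
    by (rule null_rel) (unfold bilin_rels_def, blast)
  have "phi (delta x (y + y')) = phi (\<lambda>p. delta x y p + delta x y' p)"
    using r by (intro phi_eq fv_delta fv_add) (simp_all add: diff_diff_eq)
  thus "psi x (y + y') = psi x y + psi x y'" unfolding psi_def by (simp add: phi_add fv_delta)
next
  fix c and x :: 'a and y :: 'b
  have r: "(\<lambda>p. delta (c *\<^sub>R x) y p - c * delta x y p) \<in> tensor_null"
    by (rule null_rel) (unfold bilin_rels_def, blast)
  have "phi (delta (c *\<^sub>R x) y) = phi (\<lambda>p. c * delta x y p)"
    using r by (intro phi_eq fv_delta fv_scale)
  thus "psi (c *\<^sub>R x) y = c * psi x y" unfolding psi_def by (simp add: phi_scale fv_delta)
next
  fix c and x :: 'a and y :: 'b
  have r: "(\<lambda>p. delta x (c *\<^sub>R y) p - c * delta x y p) \<in> tensor_null"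
    by (rule null_rel) (unfold bilin_rels_def, blast)
  have "phi (delta x (c *\<^sub>R y)) = phi (\<lambda>p. c * delta x y p)"
    using r by (intro phi_eq fv_delta fv_scale)
  thus "psi x (c *\<^sub>R y) = c * psi x y" unfolding psi_def by (simp add: phi_scale fv_delta)
qed

lemma psi_bound: obtains K where "K \<ge> 0" "\<And>x y. \<bar>psi x y\<bar> \<le> K * (norm x * norm y)"
proof -
  obtain K where K: "K \<ge> 0" "\<And>w. w \<in> free_vs \<Longrightarrow> \<bar>phi w\<bar> \<le> K * proj_norm w" using phi_bound by blast
  have "\<bar>psi x y\<bar> \<le> K * (norm x * norm y)" for x y
    unfolding psi_def using K(2)[OF fv_delta, of x y] pn_delta[of x y] K(1)
    by (meson mult_left_mono order_trans)
  thus ?thesis using that K(1) by blast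
qed

lemma phi_sumd: "phi (\<lambda>p. \<Sum>i<(n::nat). delta (x i) (y i) p) = (\<Sum>i<n. psi (x i) (y i))"
proof (induction n)
  case 0
  have "phi (\<lambda>p. 0) = 0" using phi_null[OF null_zero] .
  thus ?case by simp
next
  case (Suc n)
  have "phi (\<lambda>p. \<Sum>i<Suc n. delta (x i) (y i) p) = phi (\<lambda>p. (\<Sum>i<n. delta (x i) (y i) p) + delta (x n) (y n) p)" by simp
  also have "\<dots> = phi (\<lambda>p. \<Sum>i<n. delta (x i) (y i) p) + phi (delta (x n) (y n))"
    by (rule phi_add[OF fv_sumd fv_delta])
  finally show ?case using Suc unfolding psi_def by simp
qed

lemma psi_scaled: assumes "\<And>x y. norm x \<le> 1 \<Longrightarrow> norm y \<le> 1 \<Longrightarrow> psi x y \<le> t" "t \<ge> 0"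
  shows "psi x y \<le> norm x * norm y * t"
proof (cases "x = 0 \<or> y = 0")
  case True
  have "psi 0 y = 0" "psi x 0 = 0" using psi_bil unfolding bil_def
    by (metis mult_zero_left scaleR_zero_left)+
  thus ?thesis using True by auto
next
  case False
  define x' where "x' = (1 / norm x) *\<^sub>R x"
  define y' where "y' = (1 / norm y) *\<^sub>R y"
  have nx: "norm x' \<le> 1" "norm y' \<le> 1" using False unfolding x'_def y'_def by auto
  have "x = norm x *\<^sub>R x'" "y = norm y *\<^sub>R y'" using False unfolding x'_def y'_def by auto
  hence "psi x y = norm x * norm y * psi x' y'" using psi_bil unfolding bil_def by (metis mult.assoc mult.commute)
  also have "\<dots> \<le> norm x * norm y * t" using assms(1)[OF nx] by (intro mult_left_mono) auto
  finally show ?thesis .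
qed

lemma find_elementary:
  assumes a: "0 < \<alpha>" "\<alpha> < 1"
  shows "\<exists>x y. norm x \<le> 1 \<and> norm y \<le> 1 \<and> psi x y > 1 - \<alpha>"
proof (rule ccontr)
  assume na: "\<not> ?thesis"
  hence le: "\<And>x y. norm x \<le> 1 \<Longrightarrow> norm y \<le> 1 \<Longrightarrow> psi x y \<le> 1 - \<alpha>" by force
  obtain K where K: "K \<ge> 0" "\<And>v. v \<in> C \<Longrightarrow> \<bar>f v\<bar> \<le> K * vnorm P v" using fbound by blast
  let ?B = "{v\<in>C. vnorm P v \<le> 1}"
  have z1: "(\<lambda>n p. 0) \<in> C" by (rule pt_const(1)[OF fv_zero])
  have z2: "vnorm P (\<lambda>n p. 0) = 0" using pt_const(2)[where 'a='a and 'b='b, OF fv_zero] pn_zero[where 'a='a and 'b='b] by simp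
  have zB: "(\<lambda>n p. 0) \<in> ?B" using z1 z2 by simp
  have bdd: "bdd_above (f ` ?B)"
  proof (rule bdd_aboveI2)
    fix v assume vB: "v \<in> ?B"
    have "\<bar>f v\<bar> \<le> K * vnorm P v" using K(2) vB by blast
    moreover have "K * vnorm P v \<le> K * 1" using vB K(1) by (intro mult_left_mono) auto
    ultimately show "f v \<le> K" by linarith
  qed
  have "1 - \<alpha> < (SUP v\<in>?B. f v)" using fSUP a by simp
  then obtain v where v: "v \<in> C" "vnorm P v \<le> 1" "1 - \<alpha> < f v"
    using less_cSUP_iff[OF _ bdd] zB by blast
  define \<gamma> where "\<gamma> = f v - (1 - \<alpha>)"
  have g: "\<gamma> > 0" using v unfolding \<gamma>_def by simp
  have fv: "\<And>n. v n \<in> free_vs" using v(1) unfolding pt_carrier by auto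
  have conv: "(\<lambda>n. proj_norm (v n)) \<longlonglongrightarrow> vnorm P v" using pt_conv[OF v(1)] .
  have "vnorm P v < 1 + \<gamma>/2" using v g by simp
  from order_tendstoD(2)[OF conv this] obtain N where N: "\<And>m. m \<ge> N \<Longrightarrow> proj_norm (v m) < 1 + \<gamma>/2"
    unfolding eventually_sequentially by blast
  define e where "e = \<gamma> / (2 * (K + 1))"
  have e: "e > 0" using g K unfolding e_def by simp
  obtain M where M: "\<forall>m\<ge>M. \<forall>n\<ge>M. proj_norm (\<lambda>p. v m p - v n p) < e"
    using v(1) e unfolding pt_carrier by blast
  define m where "m = max N M"
  have pm: "proj_norm (v m) < 1 + \<gamma>/2" using N m_def by simp
  define d where "d = (\<lambda>k p. v k p + -1 * (\<lambda>k. v m) k p)"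
  have dC: "d \<in> C" unfolding d_def by (intro pt_add_in[OF v(1)] pt_scale_in pt_const(1) fv)
  have fd: "f d = f v - phi (v m)" unfolding d_def phi_def
    using fadd[OF v(1) pt_scale_in[OF pt_const(1)[OF fv[of m]]], of "-1"] fscale[OF pt_const(1)[OF fv[of m]], of "-1"] by simp
  have "vnorm P d \<le> e"
  proof (rule LIMSEQ_le_const2[OF pt_conv[OF dC]])
    show "\<exists>N. \<forall>k\<ge>N. proj_norm (d k) \<le> e"
    proof (intro exI[of _ M] allI impI)
      fix k assume "k \<ge> M"
      hence "proj_norm (\<lambda>p. v k p - v m p) < e" using M m_def by simp
      moreover have "d k = (\<lambda>p. v k p - v m p)" unfolding d_def by simp
      ultimately show "proj_norm (d k) \<le> e" by simp
    qed
  qed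
  hence "\<bar>f d\<bar> \<le> K * e" using K(2)[OF dC] K(1) by (meson mult_left_mono order_trans)
  also have "K * e < \<gamma> / 2" using g K unfolding e_def by (simp add: field_simps)
  finally have "\<bar>f v - phi (v m)\<bar> < \<gamma>/2" using fd by simp
  hence "f v - phi (v m) < \<gamma>/2" by (meson abs_less_iff)
  hence phim: "phi (v m) > 1 - \<alpha> + \<gamma>/2" using \<gamma>_def by linarith
  have "Inf (RS (v m)) < 1 + \<gamma>/2" using pm unfolding pn_RS .
  from cInf_lessD[OF RS_ne[OF fv] this] obtain n :: nat and x y where
    r: "rep (v m) n x y" "(\<Sum>i<n. norm (x i) * norm (y i)) < 1 + \<gamma>/2"
    unfolding RS_def by blast
  have "phi (v m) = phi (\<lambda>p. \<Sum>i<n. delta (x i) (y i) p)"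
    using r(1) unfolding rep_def by (intro phi_eq fv fv_sumd)
  also have "\<dots> = (\<Sum>i<n. psi (x i) (y i))" by (rule phi_sumd)
  also have "\<dots> \<le> (\<Sum>i<n. norm (x i) * norm (y i) * (1 - \<alpha>))"
    using psi_scaled[OF le] a by (intro sum_mono) auto
  also have "\<dots> = (\<Sum>i<n. norm (x i) * norm (y i)) * (1 - \<alpha>)" by (simp add: sum_distrib_right)
  also have "\<dots> \<le> (1 + \<gamma>/2) * (1 - \<alpha>)" using r(2) a by (intro mult_right_mono) auto
  also have "\<dots> \<le> 1 - \<alpha> + \<gamma>/2" using a g by (simp add: algebra_simps)
  finally show False using phim by simp
qed

end

lemma ns_ops [simp]:
  "carrier (normed_space_of TYPE('c::real_normed_vector)) = UNIV"
  "vadd (normed_space_of TYPE('c)) = (+)"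
  "vscale (normed_space_of TYPE('c)) = (*\<^sub>R)"
  "vzero (normed_space_of TYPE('c)) = 0"
  "vnorm (normed_space_of TYPE('c)) = norm"
  by (simp_all add: normed_space_of_def)

lemma SUP_div_one:
  fixes f :: "'x \<Rightarrow> real"
  assumes "A \<noteq> {}" "bdd_above (f ` A)" "(SUP x\<in>A. f x) = s" "s > 0"
  shows "(SUP x\<in>A. f x / s) = 1"
proof (rule antisym)
  have le: "f x \<le> s" if "x \<in> A" for x using cSUP_upper[OF that assms(2)] assms(3) by simp
  show "(SUP x\<in>A. f x / s) \<le> 1" using assms(1) le assms(4) by (intro cSUP_least) (auto simp: field_simps)
  have bdd: "bdd_above ((\<lambda>x. f x / s) ` A)" using le assms(4) by (intro bdd_aboveI2[of _ _ 1]) (auto simp: field_simps)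
  have "f x \<le> (SUP x\<in>A. f x / s) * s" if "x \<in> A" for x
    using cSUP_upper[OF that bdd] assms(4) by (simp add: field_simps)
  hence "s \<le> (SUP x\<in>A. f x / s) * s" using assms(1,3) by (metis cSUP_least)
  thus "1 \<le> (SUP x\<in>A. f x / s)" using assms(4) by simp
qed

lemma lin_sum:
  assumes "\<And>x y. h (x + y) = h x + h y" "\<And>c x. h (c *\<^sub>R x) = c * h x"
  shows "h (\<Sum>i<(n::nat). l i *\<^sub>R x i) = (\<Sum>i<n. l i * h (x i))"
proof (induction n)
  case 0 have "h 0 = 0" using assms(1)[of 0 0] by simp
  thus ?case by simp
next
  case (Suc n) thus ?case using assms by simp
qed

lemma sd2p_extract:
  fixes g :: "nat \<Rightarrow> 'c::real_normed_vector \<Rightarrow> real"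
  assumes SD: "SD2P (normed_space_of TYPE('c))"
    and n: "n > 0" and l0: "\<forall>i<n. 0 \<le> l i" and l2: "(\<Sum>i<n. l i) = 1"
    and ga0: "\<forall>i<n. \<forall>x y. g i (x + y) = g i x + g i y"
    and gs0: "\<forall>i<n. \<forall>c x. g i (c *\<^sub>R x) = c * g i x"
    and gb: "\<forall>i<n. \<exists>K. \<forall>x. \<bar>g i x\<bar> \<le> K * norm x"
    and wit: "\<forall>i<n. norm (xw i) \<le> 1 \<and> g i (xw i) > t i"
    and tp: "\<forall>i<n. t i > 0"
    and d: "\<delta> > 0"
  shows "\<exists>x x' h. (\<forall>i<n. norm (x i) \<le> 1 \<and> g i (x i) > t i \<and> norm (x' i) \<le> 1 \<and> g i (x' i) > t i) \<and>
     (\<forall>x y. h (x + y) = h x + h y) \<and> (\<forall>c x. h (c *\<^sub>R x) = c * h x) \<and> (\<forall>x. \<bar>h x\<bar> \<le> norm x) \<and>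
     (\<Sum>i<n. l i * (h (x i) - h (x' i))) > 2 - \<delta>"
proof -
  have l: "\<And>i. i < n \<Longrightarrow> 0 \<le> l i" "(\<Sum>i<n. l i) = 1" using l0 l2 by auto
  have ga: "\<And>i x y. i < n \<Longrightarrow> g i (x + y) = g i x + g i y" using ga0 by blast
  have gs: "\<And>i c x. i < n \<Longrightarrow> g i (c *\<^sub>R x) = c * g i x" using gs0 by blast
  let ?B = "{x::'c. norm x \<le> 1}"
  obtain K where K: "\<And>i x. i < n \<Longrightarrow> \<bar>g i x\<bar> \<le> K i * norm x"
    using gb by metis
  define s where "s i = (SUP x\<in>?B. g i x)" for i
  have Bne: "?B \<noteq> {}" by (auto intro: exI[of _ 0])
  have bdd: "bdd_above (g i ` ?B)" if "i < n" for i
  proof (rule bdd_aboveI2)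
    fix x :: 'c assume "x \<in> ?B"
    hence "K i * norm x \<le> \<bar>K i\<bar> * 1"
      using mult_right_mono[of "K i" "\<bar>K i\<bar>" "norm x"] mult_left_mono[of "norm x" 1 "\<bar>K i\<bar>"] abs_ge_self[of "K i"] by auto
    thus "g i x \<le> \<bar>K i\<bar>" using K[OF that, of x] by linarith
  qed
  have st: "s i > t i" if "i < n" for i
    using cSUP_upper[of "xw i" ?B "g i", OF _ bdd[OF that]] wit that unfolding s_def by auto
  have sp: "s i > 0" if "i < n" for i using st[OF that] tp that by fastforce
  define gg where "gg i x = g i x / s i" for i x
  define \<beta> where "\<beta> i = 1 - t i / s i" for i
  have du: "dual_unit (normed_space_of TYPE('c)) (gg i)" if i: "i < n" for i
    unfolding dual_unit_def ns_ops
  proof (intro conjI ballI allI)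
    fix u v :: 'c show "gg i (u + v) = gg i u + gg i v" unfolding gg_def using ga[OF i] by (simp add: add_divide_distrib)
  next
    fix c and v :: 'c show "gg i (c *\<^sub>R v) = c * gg i v" unfolding gg_def using gs[OF i] by simp
  next
    show "\<exists>C. \<forall>v\<in>UNIV. \<bar>gg i v\<bar> \<le> C * norm v"
    proof (intro exI[of _ "K i / s i"] ballI)
      fix v :: 'c
      have "\<bar>g i v\<bar> / s i \<le> K i * norm v / s i" using K[OF i, of v] sp[OF i] by (simp add: divide_right_mono)
      thus "\<bar>gg i v\<bar> \<le> K i / s i * norm v" unfolding gg_def using sp[OF i] by simp
    qed
  next
    have "{v \<in> UNIV. norm v \<le> 1} = ?B" by simp
    thus "(SUP v\<in>{v \<in> UNIV. norm v \<le> 1}. gg i v) = 1"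
      unfolding gg_def using SUP_div_one[OF Bne bdd[OF i] _ sp[OF i]] s_def by simp
  qed
  have bt: "0 < \<beta> i \<and> \<beta> i < 1" if i: "i < n" for i
    using st[OF i] sp[OF i] tp i unfolding \<beta>_def by (simp add: field_simps)
  have slc: "x \<in> slice (normed_space_of TYPE('c)) (gg i) (\<beta> i) \<longleftrightarrow> norm x \<le> 1 \<and> g i x > t i" if i: "i < n" for i x
    unfolding slice_def ns_ops gg_def \<beta>_def using sp[OF i] by (simp add: field_simps)
  let ?S = "{lincomb (normed_space_of TYPE('c)) n l x | x. \<forall>i<n. x i \<in> slice (normed_space_of TYPE('c)) (gg i) (\<beta> i)}"
  have "ndiam (normed_space_of TYPE('c)) ?S = 2"
    using SD n l du bt unfolding SD2P_def by blast
  hence D: "Sup {norm (a + (-1) *\<^sub>R b) | a b. a \<in> ?S \<and> b \<in> ?S} = 2" unfolding ndiam_def ns_ops by simp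
  have x0S: "lincomb (normed_space_of TYPE('c)) n l xw \<in> ?S" using slc wit by blast
  have "2 - \<delta> < Sup {norm (a + (-1) *\<^sub>R b) | a b. a \<in> ?S \<and> b \<in> ?S}" using D d by simp
  from less_cSupD[OF _ this] x0S obtain a b where ab: "a \<in> ?S" "b \<in> ?S" "2 - \<delta> < norm (a + (-1) *\<^sub>R b)"
    by blast
  obtain x where x: "a = (\<Sum>i<n. l i *\<^sub>R x i)" "\<forall>i<n. norm (x i) \<le> 1 \<and> g i (x i) > t i"
    using ab(1) slc unfolding lincomb_ns by blast
  obtain x' where x': "b = (\<Sum>i<n. l i *\<^sub>R x' i)" "\<forall>i<n. norm (x' i) \<le> 1 \<and> g i (x' i) > t i"
    using ab(2) slc unfolding lincomb_ns by blast
  obtain h where h: "\<forall>x y. h (x + y) = h x + h y" "\<forall>c x. h (c *\<^sub>R x) = c * h x" "\<forall>x. \<bar>h x\<bar> \<le> norm x"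
    "h (a + (-1) *\<^sub>R b) = norm (a + (-1) *\<^sub>R b)"
    using hahn_banach_norm[of "a + (-1) *\<^sub>R b"] by blast
  have "h (a + (-1) *\<^sub>R b) = h a - h b" using h(1)[rule_format, of a "(-1) *\<^sub>R b"] h(2)[rule_format, of "-1" b] by simp
  also have "h a = (\<Sum>i<n. l i * h (x i))" unfolding x(1) using h(1,2) by (intro lin_sum) auto
  also have "h b = (\<Sum>i<n. l i * h (x' i))" unfolding x'(1) using h(1,2) by (intro lin_sum) auto
  finally have "(\<Sum>i<n. l i * (h (x i) - h (x' i))) = norm (a + (-1) *\<^sub>R b)"
    using h(4) by (simp add: right_diff_distrib sum_subtractf)
  thus ?thesis using x(2) x'(2) h(1-3) ab(3) by (intro exI[of _ x] exI[of _ x'] exI[of _ h]) auto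
qed

lemma lower_bound_construction:
  fixes f :: "nat \<Rightarrow> (nat \<Rightarrow> 'a::banach \<times> 'b::banach \<Rightarrow> real) \<Rightarrow> real"
  assumes SX: "SD2P (normed_space_of TYPE('a))" and SY: "SD2P (normed_space_of TYPE('b))"
    and n: "n > 0" and l: "\<And>i. i < n \<Longrightarrow> 0 \<le> l i" "(\<Sum>i<n. l i) = 1"
    and fa: "\<And>i. i < n \<Longrightarrow> dual_unit (proj_tensor TYPE('a) TYPE('b)) (f i) \<and> 0 < \<alpha> i \<and> \<alpha> i < 1"
    and e: "\<epsilon> > 0"
  shows "\<exists>u v. (\<forall>i<n. u i \<in> slice (proj_tensor TYPE('a) TYPE('b)) (f i) (\<alpha> i) \<and> v i \<in> slice (proj_tensor TYPE('a) TYPE('b)) (f i) (\<alpha> i)) \<and>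
     vnorm (proj_tensor TYPE('a) TYPE('b)) (vadd (proj_tensor TYPE('a) TYPE('b)) (lincomb (proj_tensor TYPE('a) TYPE('b)) n l u)
        (vscale (proj_tensor TYPE('a) TYPE('b)) (-1) (lincomb (proj_tensor TYPE('a) TYPE('b)) n l v))) > 2 - \<epsilon>"
proof -
  have l': "\<forall>i<n. 0 \<le> l i" using l(1) by blast
  define \<delta> where "\<delta> = \<epsilon> / 3"
  have d: "\<delta> > 0" using e unfolding \<delta>_def by simp
  have du: "dT (f i)" if "i < n" for i using fa[OF that] unfolding dT_def by blast
  define ps where "ps i = dT.psi (f i)" for i
  have bil: "bil (ps i)" if "i < n" for i unfolding ps_def using dT.psi_bil[OF du[OF that]] .
  have psb: "\<exists>K. \<forall>x y. \<bar>ps i x y\<bar> \<le> K * (norm x * norm y)" if "i < n" for i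
    unfolding ps_def using dT.psi_bound[OF du[OF that]] by metis
  have ex: "\<forall>i. \<exists>z. i < n \<longrightarrow> norm (fst z) \<le> 1 \<and> norm (snd z) \<le> 1 \<and> ps i (fst z) (snd z) > 1 - \<alpha> i"
  proof
    fix i show "\<exists>z. i < n \<longrightarrow> norm (fst z) \<le> 1 \<and> norm (snd z) \<le> 1 \<and> ps i (fst z) (snd z) > 1 - \<alpha> i"
    proof (cases "i < n")
      case True
      then obtain a b where "norm a \<le> 1 \<and> norm b \<le> 1 \<and> ps i a b > 1 - \<alpha> i"
        unfolding ps_def using dT.find_elementary[OF du[OF True]] fa[OF True] by blast
      thus ?thesis by (intro exI[of _ "(a,b)"]) simp
    qed simp
  qed
  obtain F where F: "\<forall>i. i < n \<longrightarrow> norm (fst (F i)) \<le> 1 \<and> norm (snd (F i)) \<le> 1 \<and> ps i (fst (F i)) (snd (F i)) > 1 - \<alpha> i"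
    using choice[OF ex] by fast
  define x0 where "x0 i = fst (F i)" for i
  define y0 where "y0 i = snd (F i)" for i
  have xy0: "\<And>i. i < n \<Longrightarrow> norm (x0 i) \<le> 1 \<and> norm (y0 i) \<le> 1 \<and> ps i (x0 i) (y0 i) > 1 - \<alpha> i"
    using F unfolding x0_def y0_def by blast
  have bilf: "\<And>i x x' y. i < n \<Longrightarrow> ps i (x + x') y = ps i x y + ps i x' y"
    "\<And>i x y y'. i < n \<Longrightarrow> ps i x (y + y') = ps i x y + ps i x y'"
    "\<And>i c x y. i < n \<Longrightarrow> ps i (c *\<^sub>R x) y = c * ps i x y"
    "\<And>i c x y. i < n \<Longrightarrow> ps i x (c *\<^sub>R y) = c * ps i x y"
    using bil unfolding bil_def by blast+
  have gbY: "\<exists>K. \<forall>y. \<bar>ps i (x0 i) y\<bar> \<le> K * norm y" if i: "i < n" for i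
  proof -
    obtain K where K: "\<forall>x y. \<bar>ps i x y\<bar> \<le> K * (norm x * norm y)" using psb[OF i] by blast
    show ?thesis by (rule exI[of _ "K * norm (x0 i)"]) (use K in \<open>simp add: mult.assoc\<close>)
  qed
  obtain y y' hy where Y: "\<forall>i<n. norm (y i) \<le> 1 \<and> ps i (x0 i) (y i) > 1 - \<alpha> i \<and> norm (y' i) \<le> 1 \<and> ps i (x0 i) (y' i) > 1 - \<alpha> i"
    "\<forall>x y. hy (x + y) = hy x + hy y" "\<forall>c x. hy (c *\<^sub>R x) = c * hy x" "\<forall>x. \<bar>hy x\<bar> \<le> norm x"
    "(\<Sum>i<n. l i * (hy (y i) - hy (y' i))) > 2 - \<delta>"
  proof -
    have gaY: "\<forall>i<n. \<forall>a b. ps i (x0 i) (a + b) = ps i (x0 i) a + ps i (x0 i) b" using bilf(2) by blast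
    have gsY: "\<forall>i<n. \<forall>c a. ps i (x0 i) (c *\<^sub>R a) = c * ps i (x0 i) a" using bilf(4) by blast
    have witY: "\<forall>i<n. norm (y0 i) \<le> 1 \<and> ps i (x0 i) (y0 i) > 1 - \<alpha> i" using xy0 by blast
    have tpY: "\<forall>i<n. 1 - \<alpha> i > 0" using fa by simp
    have gbY': "\<forall>i<n. \<exists>K. \<forall>y. \<bar>ps i (x0 i) y\<bar> \<le> K * norm y" using gbY by blast
    from sd2p_extract[where g="\<lambda>i y. ps i (x0 i) y" and xw=y0 and t="\<lambda>i. 1 - \<alpha> i", OF SY n l' l(2) gaY gsY gbY' witY tpY d]
    show ?thesis
      apply (elim exE conjE)
      apply (rule that)
          apply assumption
         apply assumption
        apply assumption
       apply assumption
      apply assumption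
      done
  qed
  have "(\<Sum>i<n. l i * hy (y' i)) \<ge> (\<Sum>i<n. l i * (-1))"
  proof (rule sum_mono)
    fix i assume "i \<in> {..<n}"
    hence i: "i < n" by simp
    have a: "\<bar>hy (y' i)\<bar> \<le> norm (y' i)" using Y(4) by blast
    have b: "norm (y' i) \<le> 1" using Y(1) i by blast
    have "\<bar>hy (y' i)\<bar> \<le> 1" using a b by linarith
    hence "-1 \<le> hy (y' i)" by (simp add: abs_le_iff)
    thus "l i * (-1) \<le> l i * hy (y' i)" using l(1)[OF i] by (rule mult_left_mono)
  qed
  hence sy': "(\<Sum>i<n. l i * hy (y' i)) \<ge> -1" using l(2) by (simp add: sum_negf)
  have sy: "(\<Sum>i<n. l i * hy (y i)) > 1 - \<delta>"
    using Y(5) sy' by (simp add: right_diff_distrib sum_subtractf)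
  have gbX: "\<exists>K. \<forall>x. \<bar>ps i x (y i)\<bar> \<le> K * norm x" if i: "i < n" for i
  proof -
    obtain K where K: "\<forall>x y. \<bar>ps i x y\<bar> \<le> K * (norm x * norm y)" using psb[OF i] by blast
    show ?thesis by (rule exI[of _ "K * norm (y i)"]) (use K in \<open>simp add: ac_simps\<close>)
  qed
  obtain x x' hx where X: "\<forall>i<n. norm (x i) \<le> 1 \<and> ps i (x i) (y i) > 1 - \<alpha> i \<and> norm (x' i) \<le> 1 \<and> ps i (x' i) (y i) > 1 - \<alpha> i"
    "\<forall>x y. hx (x + y) = hx x + hx y" "\<forall>c x. hx (c *\<^sub>R x) = c * hx x" "\<forall>x. \<bar>hx x\<bar> \<le> norm x"
    "(\<Sum>i<n. l i * (hx (x i) - hx (x' i))) > 2 - \<delta>"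
  proof -
    have gaX: "\<forall>i<n. \<forall>a b. ps i (a + b) (y i) = ps i a (y i) + ps i b (y i)" using bilf(1) by blast
    have gsX: "\<forall>i<n. \<forall>c a. ps i (c *\<^sub>R a) (y i) = c * ps i a (y i)" using bilf(3) by blast
    have witX: "\<forall>i<n. norm (x0 i) \<le> 1 \<and> ps i (x0 i) (y i) > 1 - \<alpha> i" using xy0 Y(1) by blast
    have tpX: "\<forall>i<n. 1 - \<alpha> i > 0" using fa by simp
    have gbX': "\<forall>i<n. \<exists>K. \<forall>x. \<bar>ps i x (y i)\<bar> \<le> K * norm x" using gbX by blast
    from sd2p_extract[where g="\<lambda>i x. ps i x (y i)" and xw=x0 and t="\<lambda>i. 1 - \<alpha> i", OF SX n l' l(2) gaX gsX gbX' witX tpX d]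
    show ?thesis
      apply (elim exE conjE)
      apply (rule that)
          apply assumption
         apply assumption
        apply assumption
       apply assumption
      apply assumption
      done
  qed
  let ?P = "proj_tensor TYPE('a) TYPE('b)"
  define u where "u i = (\<lambda>m::nat. delta (x i) (y i))" for i
  define v where "v i = (\<lambda>m::nat. delta (x' i) (y i))" for i
  have slu: "u i \<in> slice ?P (f i) (\<alpha> i) \<and> v i \<in> slice ?P (f i) (\<alpha> i)" if i: "i < n" for i
  proof -
    have fu: "f i (u i) = ps i (x i) (y i)" "f i (v i) = ps i (x' i) (y i)"
      unfolding u_def v_def ps_def dT.psi_def[OF du[OF i]] dT.phi_def[OF du[OF i]] by simp_all
    have n1: "norm (x i) * norm (y i) \<le> 1" "norm (x' i) * norm (y i) \<le> 1"
      using X(1) Y(1) i by (auto intro: mult_le_one)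
    have "vnorm ?P (u i) \<le> 1" "vnorm ?P (v i) \<le> 1"
      unfolding u_def v_def pt_const(2)[OF fv_delta] using pn_delta n1 by (meson order_trans)+
    thus ?thesis unfolding slice_def using fu X(1) i pt_const(1)[OF fv_delta] unfolding u_def v_def by auto
  qed
  define W where "W = (\<lambda>p. (\<Sum>i<n. l i * delta (x i) (y i) p) - (\<Sum>i<n. l i * delta (x' i) (y i) p))"
  have W1: "(\<lambda>p. \<Sum>i<n. l i * delta (x i) (y i) p) \<in> free_vs" by (rule fv_sum) (rule fv_delta)
  have W2: "(\<lambda>p. \<Sum>i<n. l i * delta (x' i) (y i) p) \<in> free_vs" by (rule fv_sum) (rule fv_delta)
  have Wf: "W \<in> free_vs" unfolding W_def using fv_diff[OF W1 W2] .
  have eqW: "vadd ?P (lincomb ?P n l u) (vscale ?P (-1) (lincomb ?P n l v)) = (\<lambda>m. W)"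
    unfolding lincomb_pt pt_ops W_def u_def v_def by simp
  define B where "B a b = hx a * hy b" for a b
  have bilB: "bil B" unfolding bil_def B_def using X(2,3) Y(2,3) by (simp add: algebra_simps)
  have bndB: "B a b \<le> norm a * norm b" for a b
  proof -
    have "B a b \<le> \<bar>hx a\<bar> * \<bar>hy b\<bar>" unfolding B_def by (metis abs_ge_self abs_mult)
    also have "\<dots> \<le> norm a * norm b" using X(4) Y(4) by (intro mult_mono) auto
    finally show ?thesis .
  qed
  have "Bt B W = (\<Sum>i<n. l i * B (x i) (y i)) - (\<Sum>i<n. l i * B (x' i) (y i))"
    unfolding W_def Bt_diff[OF W1 W2] Bt_sum[OF fv_delta] Bt_delta ..
  also have "\<dots> = (\<Sum>i<n. l i * ((hx (x i) - hx (x' i)) * hy (y i)))"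
    unfolding B_def by (simp add: sum_subtractf[symmetric] algebra_simps)
  also have "\<dots> \<ge> (\<Sum>i<n. l i * (2 * hy (y i) + (hx (x i) - hx (x' i)) - 2))"
  proof (rule sum_mono)
    fix i assume "i \<in> {..<n}"
    hence i: "i < n" by simp
    have a1: "\<bar>hx (x i)\<bar> \<le> norm (x i)" "\<bar>hx (x' i)\<bar> \<le> norm (x' i)" using X(4) by blast+
    have a2: "norm (x i) \<le> 1" "norm (x' i) \<le> 1" using X(1) i by blast+
    have a: "hx (x i) - hx (x' i) \<le> 2" using a1 a2 by (simp add: abs_le_iff)
    have b1: "\<bar>hy (y i)\<bar> \<le> norm (y i)" using Y(4) by blast
    have b2: "norm (y i) \<le> 1" using Y(1) i by blast
    have b: "hy (y i) \<le> 1" using b1 b2 by (simp add: abs_le_iff)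
    have "0 \<le> (2 - (hx (x i) - hx (x' i))) * (1 - hy (y i))" using a b by simp
    hence "2 * hy (y i) + (hx (x i) - hx (x' i)) - 2 \<le> (hx (x i) - hx (x' i)) * hy (y i)"
      by (simp add: algebra_simps)
    thus "l i * (2 * hy (y i) + (hx (x i) - hx (x' i)) - 2) \<le> l i * ((hx (x i) - hx (x' i)) * hy (y i))"
      using l(1)[OF i] by (intro mult_left_mono)
  qed
  finally have "Bt B W \<ge> 2 * (\<Sum>i<n. l i * hy (y i)) + (\<Sum>i<n. l i * (hx (x i) - hx (x' i))) - 2 * (\<Sum>i<n. l i)"
    by (simp add: algebra_simps sum.distrib sum_subtractf sum_distrib_left)
  hence "Bt B W > 2 - \<epsilon>" using sy X(5) l(2) unfolding \<delta>_def by simp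
  moreover have "Bt B W \<le> proj_norm W" by (rule Bt_le_pn[OF bilB bndB Wf])
  moreover have "vnorm ?P (\<lambda>m. W) = proj_norm W" by (rule pt_const(2)[OF Wf])
  ultimately show ?thesis using slu eqW by (intro exI[of _ u] exI[of _ v]) auto
qed

lemma slice_bound: assumes "\<And>i. i < n \<Longrightarrow> u i \<in> slice (proj_tensor TYPE('a::real_normed_vector) TYPE('b::real_normed_vector)) (f i) (\<alpha> i)"
  "\<And>i. i < n \<Longrightarrow> 0 \<le> l i" "(\<Sum>i<n. l i) = 1"
  shows "lincomb (proj_tensor TYPE('a) TYPE('b)) n l u \<in> carrier (proj_tensor TYPE('a) TYPE('b))"
    "vnorm (proj_tensor TYPE('a) TYPE('b)) (lincomb (proj_tensor TYPE('a) TYPE('b)) n l u) \<le> 1"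
proof -
  have uc: "\<And>i. i < n \<Longrightarrow> u i \<in> carrier (proj_tensor TYPE('a) TYPE('b))"
    and un: "\<And>i. i < n \<Longrightarrow> vnorm (proj_tensor TYPE('a) TYPE('b)) (u i) \<le> 1"
    using assms(1) unfolding slice_def by blast+
  show "lincomb (proj_tensor TYPE('a) TYPE('b)) n l u \<in> carrier (proj_tensor TYPE('a) TYPE('b))"
    using uc by (rule lincomb_pt_in)
  have "vnorm (proj_tensor TYPE('a) TYPE('b)) (lincomb (proj_tensor TYPE('a) TYPE('b)) n l u)
      \<le> (\<Sum>i<n. l i * vnorm (proj_tensor TYPE('a) TYPE('b)) (u i))"
    using uc assms(2) by (rule lincomb_pt_norm)
  also have "\<dots> \<le> (\<Sum>i<n. l i * 1)"
  proof (rule sum_mono)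
    fix i assume "i \<in> {..<n}"
    hence i: "i < n" by simp
    show "l i * vnorm (proj_tensor TYPE('a) TYPE('b)) (u i) \<le> l i * 1"
      using un[OF i] assms(2)[OF i] by (rule mult_left_mono)
  qed
  finally show "vnorm (proj_tensor TYPE('a) TYPE('b)) (lincomb (proj_tensor TYPE('a) TYPE('b)) n l u) \<le> 1"
    using assms(3) by simp
qed

lemma sup2: fixes D :: "real set"
  assumes "\<And>d. d \<in> D \<Longrightarrow> d \<le> 2" "\<And>e. e > 0 \<Longrightarrow> \<exists>d\<in>D. d > 2 - e"
  shows "Sup D = 2"
proof -
  have ne: "D \<noteq> {}" using assms(2)[of 1] by auto
  show ?thesis
  proof (rule cSup_eq_non_empty[OF ne])
    fix d assume "d \<in> D" thus "d \<le> 2" by (rule assms(1))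
  next
    fix y assume ub: "\<And>d. d \<in> D \<Longrightarrow> d \<le> y"
    show "2 \<le> y"
    proof (rule ccontr)
      assume "\<not> 2 \<le> y"
      hence "2 - y > 0" by simp
      from assms(2)[OF this] obtain d where "d \<in> D" "d > 2 - (2 - y)" by blast
      thus False using ub by force
    qed
  qed
qed

theorem mainTheorem9:
  assumes "SD2P (normed_space_of TYPE('a::banach))"
      and "SD2P (normed_space_of TYPE('b::banach))"
  shows "SD2P (proj_tensor TYPE('a) TYPE('b))"
  unfolding SD2P_def
proof (intro allI impI)
  fix n :: nat and l :: "nat \<Rightarrow> real" and f :: "nat \<Rightarrow> (nat \<Rightarrow> 'a \<times> 'b \<Rightarrow> real) \<Rightarrow> real" and \<alpha> :: "nat \<Rightarrow> real"
  assume n: "n > 0" and l0: "\<forall>i<n. 0 \<le> l i" and l2: "(\<Sum>i<n. l i) = 1"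
    and fa0: "\<forall>i<n. dual_unit (proj_tensor TYPE('a) TYPE('b)) (f i) \<and> 0 < \<alpha> i \<and> \<alpha> i < 1"
  have l1: "\<And>i. i < n \<Longrightarrow> 0 \<le> l i" using l0 by blast
  have fa: "\<And>i. i < n \<Longrightarrow> dual_unit (proj_tensor TYPE('a) TYPE('b)) (f i) \<and> 0 < \<alpha> i \<and> \<alpha> i < 1" using fa0 by blast
  let ?P = "proj_tensor TYPE('a) TYPE('b)"
  let ?S = "{lincomb ?P n l x | x. \<forall>i<n. x i \<in> slice ?P (f i) (\<alpha> i)}"
  let ?D = "{vnorm ?P (vadd ?P a (vscale ?P (-1) b)) | a b. a \<in> ?S \<and> b \<in> ?S}"
  have lower: "\<exists>d\<in>?D. d > 2 - \<epsilon>" if e: "\<epsilon> > 0" for \<epsilon>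
  proof -
    have E: "\<exists>u v. (\<forall>i<n. u i \<in> slice ?P (f i) (\<alpha> i) \<and> v i \<in> slice ?P (f i) (\<alpha> i)) \<and>
      vnorm ?P (vadd ?P (lincomb ?P n l u) (vscale ?P (-1) (lincomb ?P n l v))) > 2 - \<epsilon>"
      by (rule lower_bound_construction[OF assms n]) (use l1 l2 fa e in auto)
    then obtain u v where uv: "\<forall>i<n. u i \<in> slice ?P (f i) (\<alpha> i) \<and> v i \<in> slice ?P (f i) (\<alpha> i)"
      "vnorm ?P (vadd ?P (lincomb ?P n l u) (vscale ?P (-1) (lincomb ?P n l v))) > 2 - \<epsilon>"
      by (elim exE conjE)
    have "lincomb ?P n l u \<in> ?S" "lincomb ?P n l v \<in> ?S" using uv(1) by blast+
    thus ?thesis using uv(2) by blast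
  qed
  have upper: "d \<le> 2" if dD: "d \<in> ?D" for d
  proof -
    obtain a b where ab: "d = vnorm ?P (vadd ?P a (vscale ?P (-1) b))" "a \<in> ?S" "b \<in> ?S" using dD by blast
    obtain u where u: "a = lincomb ?P n l u" "\<forall>i<n. u i \<in> slice ?P (f i) (\<alpha> i)" using ab(2) by blast
    obtain v where v: "b = lincomb ?P n l v" "\<forall>i<n. v i \<in> slice ?P (f i) (\<alpha> i)" using ab(3) by blast
    have ua: "a \<in> carrier ?P" "vnorm ?P a \<le> 1" using slice_bound[of n u f \<alpha> l] u l1 l2 by auto
    have vb: "b \<in> carrier ?P" "vnorm ?P b \<le> 1" using slice_bound[of n v f \<alpha> l] v l1 l2 by auto
    have "d = vnorm ?P (\<lambda>m p. a m p + (\<lambda>m p. -1 * b m p) m p)" using ab(1) by simp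
    also have "\<dots> \<le> vnorm ?P a + vnorm ?P (\<lambda>m p. -1 * b m p)"
      by (rule pt_vnorm_add[OF ua(1) pt_scale_in[OF vb(1)]])
    also have "vnorm ?P (\<lambda>m p. -1 * b m p) \<le> \<bar>-1\<bar> * vnorm ?P b" by (rule pt_vnorm_scale[OF vb(1)])
    finally show ?thesis using ua(2) vb(2) by simp
  qed
  show "ndiam ?P ?S = 2" unfolding ndiam_def
    by (rule sup2) (use upper lower in blast)+
qed

end
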